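(* Let $S$ be a multiplicatively closed subset of $R$ and $M$ an $R$-module. Consider: (a) $S^{-1}M$ satisfies the dual of Property $\mathcal{A}$ as an $R$-module; (b) $S^{-1}M$ satisfies the dual of Property $\mathcal{A}$ as an $S^{-1}R$-module; (c) $M$ satisfies the dual of Property $\mathcal{A}$ as an $R$-module. Then (a) and (b) are equivalent. If moreover $S\cap W_R(M)=\emptyset$ and $S\cap Z_R(M)=\emptyset$, then (a), (b), (c) are all equivalent.
   Context: All rings are commutative with identity. For an $R$-module $M$, $W_R(M)=\{r\in R : rM\neq M\}$ and $Z_R(M)=\{r\in R: rm=0 \text{ for some } 0\neq m\in M\}$. An $R$-module $M$ satisfies the dual of Property $\mathcal{A}$ if for every finitely generated ideal $I$ of $R$ with $I\subseteq W_R(M)$ we have $IM\neq M$. *)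

theory Defs
  imports "HOL-Algebra.Algebra"
begin

text \<open>Rings: commutative rings with identity (HOL-Algebra cring).
  Modules: HOL-Algebra module records \<open>('a,'b) module\<close> (multiplication/one fields unused).\<close>

definition mult_closed :: "('a, 'c) ring_scheme \<Rightarrow> 'a set \<Rightarrow> bool" where
  "mult_closed R S \<longleftrightarrow> S \<subseteq> carrier R \<and> \<one>\<^bsub>R\<^esub> \<in> S \<and>
     (\<forall>s\<in>S. \<forall>t\<in>S. s \<otimes>\<^bsub>R\<^esub> t \<in> S)"

definition W_set :: "('a, 'c) ring_scheme \<Rightarrow> ('a, 'b, 'd) module_scheme \<Rightarrow> 'a set" where
  "W_set R M = {r \<in> carrier R. (\<lambda>m. r \<odot>\<^bsub>M\<^esub> m) ` carrier M \<noteq> carrier M}"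

definition Z_set :: "('a, 'c) ring_scheme \<Rightarrow> ('a, 'b, 'd) module_scheme \<Rightarrow> 'a set" where
  "Z_set R M = {r \<in> carrier R. \<exists>m\<in>carrier M. m \<noteq> \<zero>\<^bsub>M\<^esub> \<and> r \<odot>\<^bsub>M\<^esub> m = \<zero>\<^bsub>M\<^esub>}"

definition ideal_smult :: "('a, 'b, 'd) module_scheme \<Rightarrow> 'a set \<Rightarrow> 'b set" where
  "ideal_smult M I = generate (add_monoid M) {a \<odot>\<^bsub>M\<^esub> m | a m. a \<in> I \<and> m \<in> carrier M}"

definition fg_ideal :: "('a, 'c) ring_scheme \<Rightarrow> 'a set \<Rightarrow> bool" where
  "fg_ideal R I \<longleftrightarrow> (\<exists>A. finite A \<and> A \<subseteq> carrier R \<and> I = Idl\<^bsub>R\<^esub> A)"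

definition dual_prop_A :: "('a, 'c) ring_scheme \<Rightarrow> ('a, 'b, 'd) module_scheme \<Rightarrow> bool" where
  "dual_prop_A R M \<longleftrightarrow>
     (\<forall>I. fg_ideal R I \<and> I \<subseteq> W_set R M \<longrightarrow> ideal_smult M I \<noteq> carrier M)"

definition loc_rel :: "('a, 'c) ring_scheme \<Rightarrow> ('a, 'b, 'd) module_scheme \<Rightarrow> 'a set
    \<Rightarrow> (('b \<times> 'a) \<times> ('b \<times> 'a)) set" where
  "loc_rel R M S = {((m, s), (m', s')). m \<in> carrier M \<and> s \<in> S \<and> m' \<in> carrier M \<and> s' \<in> S \<and>
      (\<exists>u\<in>S. u \<odot>\<^bsub>M\<^esub> ((s' \<odot>\<^bsub>M\<^esub> m) \<ominus>\<^bsub>M\<^esub> (s \<odot>\<^bsub>M\<^esub> m')) = \<zero>\<^bsub>M\<^esub>)}"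

definition ring_loc_rel :: "('a, 'c) ring_scheme \<Rightarrow> 'a set \<Rightarrow> (('a \<times> 'a) \<times> ('a \<times> 'a)) set" where
  "ring_loc_rel R S = {((a, s), (a', s')). a \<in> carrier R \<and> s \<in> S \<and> a' \<in> carrier R \<and> s' \<in> S \<and>
      (\<exists>u\<in>S. u \<otimes>\<^bsub>R\<^esub> ((s' \<otimes>\<^bsub>R\<^esub> a) \<ominus>\<^bsub>R\<^esub> (s \<otimes>\<^bsub>R\<^esub> a')) = \<zero>\<^bsub>R\<^esub>)}"

definition loc_ring :: "('a, 'c) ring_scheme \<Rightarrow> 'a set \<Rightarrow> ('a \<times> 'a) set ring" where
  "loc_ring R S = (let E = ring_loc_rel R S in
    \<lparr> carrier = (carrier R \<times> S) // E,
      Group.monoid.mult = (\<lambda>P Q. \<Union>{E `` {(a \<otimes>\<^bsub>R\<^esub> a', s \<otimes>\<^bsub>R\<^esub> s')} | a s a' s'. (a, s) \<in> P \<and> (a', s') \<in> Q}),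
      Group.monoid.one = E `` {(\<one>\<^bsub>R\<^esub>, \<one>\<^bsub>R\<^esub>)},
      Ring.ring.zero = E `` {(\<zero>\<^bsub>R\<^esub>, \<one>\<^bsub>R\<^esub>)},
      Ring.ring.add = (\<lambda>P Q. \<Union>{E `` {((s' \<otimes>\<^bsub>R\<^esub> a) \<oplus>\<^bsub>R\<^esub> (s \<otimes>\<^bsub>R\<^esub> a'), s \<otimes>\<^bsub>R\<^esub> s')} | a s a' s'. (a, s) \<in> P \<and> (a', s') \<in> Q}) \<rparr>)"

text \<open>S^{-1}M as an R-module: r (m/s) = (r m)/s.\<close>
definition loc_module :: "('a, 'c) ring_scheme \<Rightarrow> ('a, 'b, 'd) module_scheme \<Rightarrow> 'a set
    \<Rightarrow> ('a, ('b \<times> 'a) set) module" where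
  "loc_module R M S = (let E = loc_rel R M S in
    \<lparr> carrier = (carrier M \<times> S) // E,
      Group.monoid.mult = undefined,
      Group.monoid.one = undefined,
      Ring.ring.zero = E `` {(\<zero>\<^bsub>M\<^esub>, \<one>\<^bsub>R\<^esub>)},
      Ring.ring.add = (\<lambda>P Q. \<Union>{E `` {((s' \<odot>\<^bsub>M\<^esub> m) \<oplus>\<^bsub>M\<^esub> (s \<odot>\<^bsub>M\<^esub> m'), s \<otimes>\<^bsub>R\<^esub> s')} | m s m' s'. (m, s) \<in> P \<and> (m', s') \<in> Q}),
      Module.module.smult = (\<lambda>r P. \<Union>{E `` {(r \<odot>\<^bsub>M\<^esub> m, s)} | m s. (m, s) \<in> P}) \<rparr>)"

text \<open>S^{-1}M as an S^{-1}R-module: (a/t)(m/s) = (a m)/(t s).\<close>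
definition loc_module_loc :: "('a, 'c) ring_scheme \<Rightarrow> ('a, 'b, 'd) module_scheme \<Rightarrow> 'a set
    \<Rightarrow> (('a \<times> 'a) set, ('b \<times> 'a) set) module" where
  "loc_module_loc R M S = (let E = loc_rel R M S in
    \<lparr> carrier = (carrier M \<times> S) // E,
      Group.monoid.mult = undefined,
      Group.monoid.one = undefined,
      Ring.ring.zero = E `` {(\<zero>\<^bsub>M\<^esub>, \<one>\<^bsub>R\<^esub>)},
      Ring.ring.add = (\<lambda>P Q. \<Union>{E `` {((s' \<odot>\<^bsub>M\<^esub> m) \<oplus>\<^bsub>M\<^esub> (s \<odot>\<^bsub>M\<^esub> m'), s \<otimes>\<^bsub>R\<^esub> s')} | m s m' s'. (m, s) \<in> P \<and> (m', s') \<in> Q}),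
      Module.module.smult = (\<lambda>A P. \<Union>{E `` {(a \<odot>\<^bsub>M\<^esub> m, t \<otimes>\<^bsub>R\<^esub> s)} | a t m s. (a, t) \<in> A \<and> (m, s) \<in> P}) \<rparr>)"

end

theory Submission
  imports Defs
begin

lemma (in abelian_group) minus_zero_iff:
  "x \<in> carrier G \<Longrightarrow> y \<in> carrier G \<Longrightarrow> (x \<ominus> y = \<zero>) = (x = y)"
proof -
  assume h: "x \<in> carrier G" "y \<in> carrier G"
  have "(\<zero> = x \<oplus> \<ominus> y) = (x = \<zero> \<oplus> y)" using h by (intro add.inv_solve_right) auto
  then show ?thesis using h by (auto simp: minus_eq)
qed

locale locS = module +
  fixes S assumes mc: "mult_closed R S"
begin

lemma S_sub: "S \<subseteq> carrier R" and one_S: "\<one> \<in> S"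
  and mult_S: "s \<in> S \<Longrightarrow> t \<in> S \<Longrightarrow> s \<otimes> t \<in> S"
  using mc unfolding mult_closed_def by auto

lemma S_car: "s \<in> S \<Longrightarrow> s \<in> carrier R" using S_sub by auto

abbreviation "E \<equiv> loc_rel R M S"
abbreviation "F \<equiv> ring_loc_rel R S"

lemma E_iff: "((m,s),(m',s')) \<in> E \<longleftrightarrow> m \<in> carrier M \<and> s \<in> S \<and> m' \<in> carrier M \<and> s' \<in> S \<and>
   (\<exists>u\<in>S. (u \<otimes> s') \<odot>\<^bsub>M\<^esub> m = (u \<otimes> s) \<odot>\<^bsub>M\<^esub> m')"
proof -
  have "u \<odot>\<^bsub>M\<^esub> ((s' \<odot>\<^bsub>M\<^esub> m) \<ominus>\<^bsub>M\<^esub> (s \<odot>\<^bsub>M\<^esub> m')) = \<zero>\<^bsub>M\<^esub> \<longleftrightarrow> (u \<otimes> s') \<odot>\<^bsub>M\<^esub> m = (u \<otimes> s) \<odot>\<^bsub>M\<^esub> m'"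
    if h: "m \<in> carrier M" "s \<in> S" "m' \<in> carrier M" "s' \<in> S" "u \<in> S" for u
  proof -
    have c: "s \<in> carrier R" "s' \<in> carrier R" "u \<in> carrier R" using h S_car by auto
    have "u \<odot>\<^bsub>M\<^esub> ((s' \<odot>\<^bsub>M\<^esub> m) \<ominus>\<^bsub>M\<^esub> (s \<odot>\<^bsub>M\<^esub> m')) = (u \<odot>\<^bsub>M\<^esub> (s' \<odot>\<^bsub>M\<^esub> m)) \<ominus>\<^bsub>M\<^esub> (u \<odot>\<^bsub>M\<^esub> (s \<odot>\<^bsub>M\<^esub> m'))"
      using h c by (simp add: M.minus_eq smult_r_distr smult_r_minus)
    also have "\<dots> = ((u \<otimes> s') \<odot>\<^bsub>M\<^esub> m) \<ominus>\<^bsub>M\<^esub> ((u \<otimes> s) \<odot>\<^bsub>M\<^esub> m')"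
      using h c by (simp add: smult_assoc1)
    finally show ?thesis using h c by (simp add: M.minus_zero_iff)
  qed
  then show ?thesis unfolding loc_rel_def by auto
qed

lemma F_iff: "((a,s),(a',s')) \<in> F \<longleftrightarrow> a \<in> carrier R \<and> s \<in> S \<and> a' \<in> carrier R \<and> s' \<in> S \<and>
   (\<exists>u\<in>S. u \<otimes> s' \<otimes> a = u \<otimes> s \<otimes> a')"
proof -
  have "u \<otimes> ((s' \<otimes> a) \<ominus> (s \<otimes> a')) = \<zero> \<longleftrightarrow> u \<otimes> s' \<otimes> a = u \<otimes> s \<otimes> a'"
    if h: "a \<in> carrier R" "s \<in> S" "a' \<in> carrier R" "s' \<in> S" "u \<in> S" for u
  proof -
    have c: "s \<in> carrier R" "s' \<in> carrier R" "u \<in> carrier R" using h S_car by auto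
    have "u \<otimes> ((s' \<otimes> a) \<ominus> (s \<otimes> a')) = u \<otimes> s' \<otimes> a \<ominus> u \<otimes> s \<otimes> a'"
      using h c by algebra
    then show ?thesis using h c by (simp add: minus_zero_iff)
  qed
  then show ?thesis unfolding ring_loc_rel_def by auto
qed

lemma smult_comm2: "a \<in> carrier R \<Longrightarrow> b \<in> carrier R \<Longrightarrow> x \<in> carrier M \<Longrightarrow>
   a \<odot>\<^bsub>M\<^esub> (b \<odot>\<^bsub>M\<^esub> x) = b \<odot>\<^bsub>M\<^esub> (a \<odot>\<^bsub>M\<^esub> x)"
proof -
  assume h: "a \<in> carrier R" "b \<in> carrier R" "x \<in> carrier M"
  have "a \<odot>\<^bsub>M\<^esub> (b \<odot>\<^bsub>M\<^esub> x) = (a \<otimes> b) \<odot>\<^bsub>M\<^esub> x" using h by (rule smult_assoc1[symmetric])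
  also have "a \<otimes> b = b \<otimes> a" using h(1,2) by (rule m_comm)
  also have "(b \<otimes> a) \<odot>\<^bsub>M\<^esub> x = b \<odot>\<^bsub>M\<^esub> (a \<odot>\<^bsub>M\<^esub> x)" using h by (intro smult_assoc1) auto
  finally show ?thesis .
qed

lemma equiv_E: "equiv (carrier M \<times> S) E"
proof (rule equivI)
  show "E \<subseteq> (carrier M \<times> S) \<times> (carrier M \<times> S)" by (auto simp: loc_rel_def)
  show "refl_on (carrier M \<times> S) E"
  proof (rule refl_onI)
    fix x assume "x \<in> carrier M \<times> S"
    then obtain m s where x: "x = (m,s)" "m \<in> carrier M" "s \<in> S" by auto
    show "(x,x) \<in> E" unfolding x E_iff using x one_S by auto
  qed
  show "sym E"
  proof (rule symI)
    fix x y assume "(x,y) \<in> E"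
    moreover obtain m s where x: "x = (m,s)" by fastforce
    moreover obtain m' s' where y: "y = (m',s')" by fastforce
    ultimately have h: "((m,s),(m',s')) \<in> E" by simp
    have "((m',s'),(m,s)) \<in> E" using h unfolding E_iff by metis
    then show "(y,x) \<in> E" using x y by simp
  qed
  show "trans E"
  proof (rule transI)
    fix x y z assume xy: "(x,y) \<in> E" and yz: "(y,z) \<in> E"
    obtain m s where x: "x = (m,s)" by fastforce
    obtain m' s' where y: "y = (m',s')" by fastforce
    obtain m'' s'' where z: "z = (m'',s'')" by fastforce
    from xy yz obtain u v where *: "m \<in> carrier M" "s \<in> S" "m' \<in> carrier M" "s' \<in> S" "m'' \<in> carrier M" "s'' \<in> S" "u \<in> S" "v \<in> S"
       and e1: "(u \<otimes> s') \<odot>\<^bsub>M\<^esub> m = (u \<otimes> s) \<odot>\<^bsub>M\<^esub> m'" and e2: "(v \<otimes> s'') \<odot>\<^bsub>M\<^esub> m' = (v \<otimes> s') \<odot>\<^bsub>M\<^esub> m''"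
      unfolding x y z E_iff by auto
    note c = S_car[OF \<open>s\<in>S\<close>] S_car[OF \<open>s'\<in>S\<close>] S_car[OF \<open>s''\<in>S\<close>] S_car[OF \<open>u\<in>S\<close>] S_car[OF \<open>v\<in>S\<close>]
    have "(u \<otimes> v \<otimes> s' \<otimes> s'') \<odot>\<^bsub>M\<^esub> m = ((v \<otimes> s'') \<otimes> (u \<otimes> s')) \<odot>\<^bsub>M\<^esub> m"
      using * c by (simp add: m_ac)
    also have "\<dots> = (v \<otimes> s'') \<odot>\<^bsub>M\<^esub> ((u \<otimes> s') \<odot>\<^bsub>M\<^esub> m)"
      using * c by (intro smult_assoc1) auto
    also have "\<dots> = (v \<otimes> s'') \<odot>\<^bsub>M\<^esub> ((u \<otimes> s) \<odot>\<^bsub>M\<^esub> m')" by (simp only: e1)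
    also have "\<dots> = (u \<otimes> s) \<odot>\<^bsub>M\<^esub> ((v \<otimes> s'') \<odot>\<^bsub>M\<^esub> m')"
      using * c by (intro smult_comm2) auto
    also have "\<dots> = (u \<otimes> s) \<odot>\<^bsub>M\<^esub> ((v \<otimes> s') \<odot>\<^bsub>M\<^esub> m'')" by (simp only: e2)
    also have "\<dots> = ((u \<otimes> s) \<otimes> (v \<otimes> s')) \<odot>\<^bsub>M\<^esub> m''"
      using * c by (intro smult_assoc1[symmetric]) auto
    also have "\<dots> = (u \<otimes> v \<otimes> s' \<otimes> s) \<odot>\<^bsub>M\<^esub> m''"
      using * c by (simp add: m_ac)
    finally have "(u \<otimes> v \<otimes> s' \<otimes> s'') \<odot>\<^bsub>M\<^esub> m = (u \<otimes> v \<otimes> s' \<otimes> s) \<odot>\<^bsub>M\<^esub> m''" .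
    moreover have "u \<otimes> v \<otimes> s' \<in> S" using * by (intro mult_S) 
    ultimately show "(x,z) \<in> E" unfolding x z E_iff using * by blast
  qed
qed


lemma equiv_F: "equiv (carrier R \<times> S) F"
proof (rule equivI)
  show "F \<subseteq> (carrier R \<times> S) \<times> (carrier R \<times> S)" by (auto simp: ring_loc_rel_def)
  show "refl_on (carrier R \<times> S) F"
  proof (rule refl_onI)
    fix x assume "x \<in> carrier R \<times> S"
    then obtain m s where x: "x = (m,s)" "m \<in> carrier R" "s \<in> S" by auto
    show "(x,x) \<in> F" unfolding x F_iff using x one_S by auto
  qed
  show "sym F"
  proof (rule symI)
    fix x y assume "(x,y) \<in> F"
    moreover obtain m s where x: "x = (m,s)" by fastforce
    moreover obtain m' s' where y: "y = (m',s')" by fastforce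
    ultimately have h: "((m,s),(m',s')) \<in> F" by simp
    have "((m',s'),(m,s)) \<in> F" using h unfolding F_iff by metis
    then show "(y,x) \<in> F" using x y by simp
  qed
  show "trans F"
  proof (rule transI)
    fix x y z assume xy: "(x,y) \<in> F" and yz: "(y,z) \<in> F"
    obtain m s where x: "x = (m,s)" by fastforce
    obtain m' s' where y: "y = (m',s')" by fastforce
    obtain m'' s'' where z: "z = (m'',s'')" by fastforce
    from xy yz obtain u v where *: "m \<in> carrier R" "s \<in> S" "m' \<in> carrier R" "s' \<in> S" "m'' \<in> carrier R" "s'' \<in> S" "u \<in> S" "v \<in> S"
       and e1: "u \<otimes> s' \<otimes> m = u \<otimes> s \<otimes> m'" and e2: "v \<otimes> s'' \<otimes> m' = v \<otimes> s' \<otimes> m''"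
      unfolding x y z F_iff by auto
    note c = S_car[OF \<open>s\<in>S\<close>] S_car[OF \<open>s'\<in>S\<close>] S_car[OF \<open>s''\<in>S\<close>] S_car[OF \<open>u\<in>S\<close>] S_car[OF \<open>v\<in>S\<close>]
    have "(u \<otimes> v \<otimes> s') \<otimes> s'' \<otimes> m = (u \<otimes> v \<otimes> s') \<otimes> s \<otimes> m''"
    proof -
      have "(u \<otimes> v \<otimes> s') \<otimes> s'' \<otimes> m = (v \<otimes> s'') \<otimes> (u \<otimes> s' \<otimes> m)" using * c by algebra
      also have "\<dots> = (v \<otimes> s'') \<otimes> (u \<otimes> s \<otimes> m')" by (simp only: e1)
      also have "\<dots> = (u \<otimes> s) \<otimes> (v \<otimes> s'' \<otimes> m')" using * c by algebra
      also have "\<dots> = (u \<otimes> s) \<otimes> (v \<otimes> s' \<otimes> m'')" by (simp only: e2)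
      also have "\<dots> = (u \<otimes> v \<otimes> s') \<otimes> s \<otimes> m''" using * c by algebra
      finally show ?thesis .
    qed
    moreover have "u \<otimes> v \<otimes> s' \<in> S" using * by (intro mult_S) 
    ultimately show "(x,z) \<in> F" unfolding x z F_iff using * by blast
  qed
qed

definition "rcls a s = F `` {(a,s)}"
definition "cls m s = E `` {(m,s)}"
abbreviation "L \<equiv> loc_ring R S"
abbreviation "N \<equiv> loc_module R M S"
abbreviation "N' \<equiv> loc_module_loc R M S"

lemma Union_const: "(\<And>Y. Y \<in> YY \<Longrightarrow> Y = c) \<Longrightarrow> c \<in> YY \<Longrightarrow> \<Union>YY = c" by blast

lemma F_refl: "a \<in> carrier R \<Longrightarrow> s \<in> S \<Longrightarrow> ((a,s),(a,s)) \<in> F"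
  using equiv_F by (auto simp: equiv_def refl_on_def)
lemma E_refl: "m \<in> carrier M \<Longrightarrow> s \<in> S \<Longrightarrow> ((m,s),(m,s)) \<in> E"
  using equiv_E by (auto simp: equiv_def refl_on_def)

lemma rcls_eq_iff: "a \<in> carrier R \<Longrightarrow> s \<in> S \<Longrightarrow> a' \<in> carrier R \<Longrightarrow> s' \<in> S \<Longrightarrow>
   rcls a s = rcls a' s' \<longleftrightarrow> ((a,s),(a',s')) \<in> F"
  unfolding rcls_def by (rule eq_equiv_class_iff[OF equiv_F]) auto
lemma cls_eq_iff: "m \<in> carrier M \<Longrightarrow> s \<in> S \<Longrightarrow> m' \<in> carrier M \<Longrightarrow> s' \<in> S \<Longrightarrow>
   cls m s = cls m' s' \<longleftrightarrow> ((m,s),(m',s')) \<in> E"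
  unfolding cls_def by (rule eq_equiv_class_iff[OF equiv_E]) auto

lemma rcls_eqI: "a \<in> carrier R \<Longrightarrow> s \<in> S \<Longrightarrow> a' \<in> carrier R \<Longrightarrow> s' \<in> S \<Longrightarrow>
   s' \<otimes> a = s \<otimes> a' \<Longrightarrow> rcls a s = rcls a' s'"
  by (subst rcls_eq_iff) (auto simp: F_iff S_car intro!: bexI[of _ \<one>] one_S)
lemma cls_eqI: "m \<in> carrier M \<Longrightarrow> s \<in> S \<Longrightarrow> m' \<in> carrier M \<Longrightarrow> s' \<in> S \<Longrightarrow>
   s' \<odot>\<^bsub>M\<^esub> m = s \<odot>\<^bsub>M\<^esub> m' \<Longrightarrow> cls m s = cls m' s'"
  by (subst cls_eq_iff) (auto simp: E_iff S_car intro!: bexI[of _ \<one>] one_S)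

lemma mem_rcls: "(b,t) \<in> rcls a s \<longleftrightarrow> ((a,s),(b,t)) \<in> F" unfolding rcls_def by auto
lemma mem_cls: "(n,t) \<in> cls m s \<longleftrightarrow> ((m,s),(n,t)) \<in> E" unfolding cls_def by auto

lemma rcls_cong: "((a,s),(b,t)) \<in> F \<Longrightarrow> rcls a s = rcls b t"
  unfolding rcls_def by (rule equiv_class_eq[OF equiv_F])
lemma cls_cong: "((a,s),(b,t)) \<in> E \<Longrightarrow> cls a s = cls b t"
  unfolding cls_def by (rule equiv_class_eq[OF equiv_E])

lemma carrier_L: "carrier L = (carrier R \<times> S) // F"
  unfolding loc_ring_def Let_def by simp
lemma zero_L: "\<zero>\<^bsub>L\<^esub> = rcls \<zero> \<one>" unfolding loc_ring_def Let_def rcls_def by simp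
lemma one_L: "\<one>\<^bsub>L\<^esub> = rcls \<one> \<one>" unfolding loc_ring_def Let_def rcls_def by simp

lemma rcls_in: "a \<in> carrier R \<Longrightarrow> s \<in> S \<Longrightarrow> rcls a s \<in> carrier L"
  unfolding carrier_L rcls_def by (auto intro: quotientI)
lemma L_cases: assumes "Y \<in> carrier L"
  obtains a s where "a \<in> carrier R" "s \<in> S" "Y = rcls a s"
  using assms unfolding carrier_L rcls_def by (auto elim!: quotientE)

lemma add_compat:
  assumes "((a,s),(a1,s1)) \<in> F" "((b,t),(b1,t1)) \<in> F"
  shows "((t \<otimes> a \<oplus> s \<otimes> b, s \<otimes> t),(t1 \<otimes> a1 \<oplus> s1 \<otimes> b1, s1 \<otimes> t1)) \<in> F"
proof -
  from assms obtain u v where *: "a \<in> carrier R" "s \<in> S" "a1 \<in> carrier R" "s1 \<in> S" "b \<in> carrier R" "t \<in> S" "b1 \<in> carrier R" "t1 \<in> S" "u \<in> S" "v \<in> S"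
    and e1: "u \<otimes> s1 \<otimes> a = u \<otimes> s \<otimes> a1" and e2: "v \<otimes> t1 \<otimes> b = v \<otimes> t \<otimes> b1"
    unfolding F_iff by auto
  note c = S_car[OF \<open>s\<in>S\<close>] S_car[OF \<open>s1\<in>S\<close>] S_car[OF \<open>t\<in>S\<close>] S_car[OF \<open>t1\<in>S\<close>] S_car[OF \<open>u\<in>S\<close>] S_car[OF \<open>v\<in>S\<close>]
  have "(u \<otimes> v) \<otimes> (s1 \<otimes> t1) \<otimes> (t \<otimes> a \<oplus> s \<otimes> b) = (v \<otimes> t1 \<otimes> t) \<otimes> (u \<otimes> s1 \<otimes> a) \<oplus> (u \<otimes> s1 \<otimes> s) \<otimes> (v \<otimes> t1 \<otimes> b)"
    using * c by algebra
  also have "\<dots> = (v \<otimes> t1 \<otimes> t) \<otimes> (u \<otimes> s \<otimes> a1) \<oplus> (u \<otimes> s1 \<otimes> s) \<otimes> (v \<otimes> t \<otimes> b1)" by (simp only: e1 e2)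
  also have "\<dots> = (u \<otimes> v) \<otimes> (s \<otimes> t) \<otimes> (t1 \<otimes> a1 \<oplus> s1 \<otimes> b1)" using * c by algebra
  finally show ?thesis unfolding F_iff using * c by (auto intro!: bexI[of _ "u \<otimes> v"] mult_S)
qed

lemma mult_compat:
  assumes "((a,s),(a1,s1)) \<in> F" "((b,t),(b1,t1)) \<in> F"
  shows "((a \<otimes> b, s \<otimes> t),(a1 \<otimes> b1, s1 \<otimes> t1)) \<in> F"
proof -
  from assms obtain u v where *: "a \<in> carrier R" "s \<in> S" "a1 \<in> carrier R" "s1 \<in> S" "b \<in> carrier R" "t \<in> S" "b1 \<in> carrier R" "t1 \<in> S" "u \<in> S" "v \<in> S"
    and e1: "u \<otimes> s1 \<otimes> a = u \<otimes> s \<otimes> a1" and e2: "v \<otimes> t1 \<otimes> b = v \<otimes> t \<otimes> b1"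
    unfolding F_iff by auto
  note c = S_car[OF \<open>s\<in>S\<close>] S_car[OF \<open>s1\<in>S\<close>] S_car[OF \<open>t\<in>S\<close>] S_car[OF \<open>t1\<in>S\<close>] S_car[OF \<open>u\<in>S\<close>] S_car[OF \<open>v\<in>S\<close>]
  have "(u \<otimes> v) \<otimes> (s1 \<otimes> t1) \<otimes> (a \<otimes> b) = (u \<otimes> s1 \<otimes> a) \<otimes> (v \<otimes> t1 \<otimes> b)"
    using * c by algebra
  also have "\<dots> = (u \<otimes> s \<otimes> a1) \<otimes> (v \<otimes> t \<otimes> b1)" by (simp only: e1 e2)
  also have "\<dots> = (u \<otimes> v) \<otimes> (s \<otimes> t) \<otimes> (a1 \<otimes> b1)" using * c by algebra
  finally show ?thesis unfolding F_iff using * c by (auto intro!: bexI[of _ "u \<otimes> v"] mult_S)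
qed

lemma rcls_add: assumes "a \<in> carrier R" "s \<in> S" "b \<in> carrier R" "t \<in> S"
  shows "rcls a s \<oplus>\<^bsub>L\<^esub> rcls b t = rcls (t \<otimes> a \<oplus> s \<otimes> b) (s \<otimes> t)"
proof -
  have "rcls a s \<oplus>\<^bsub>L\<^esub> rcls b t = \<Union>{F `` {((s' \<otimes> a'') \<oplus> (s'' \<otimes> a'), s'' \<otimes> s')} | a'' s'' a' s'. (a'', s'') \<in> rcls a s \<and> (a', s') \<in> rcls b t}"
    unfolding loc_ring_def Let_def by simp
  also have "\<dots> = rcls (t \<otimes> a \<oplus> s \<otimes> b) (s \<otimes> t)"
  proof (rule Union_const)
    fix Y assume "Y \<in> {F `` {((s' \<otimes> a'') \<oplus> (s'' \<otimes> a'), s'' \<otimes> s')} | a'' s'' a' s'. (a'', s'') \<in> rcls a s \<and> (a', s') \<in> rcls b t}"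
    then obtain a'' s'' a' s' where Y: "Y = rcls ((s' \<otimes> a'') \<oplus> (s'' \<otimes> a')) (s'' \<otimes> s')"
      and h: "((a,s),(a'',s'')) \<in> F" "((b,t),(a',s')) \<in> F" unfolding mem_rcls rcls_def by blast
    from add_compat[OF h] have "((t \<otimes> a \<oplus> s \<otimes> b, s \<otimes> t), (s' \<otimes> a'' \<oplus> s'' \<otimes> a', s'' \<otimes> s')) \<in> F" .
    then show "Y = rcls (t \<otimes> a \<oplus> s \<otimes> b) (s \<otimes> t)" unfolding Y by (metis rcls_cong)
  next
    show "rcls (t \<otimes> a \<oplus> s \<otimes> b) (s \<otimes> t) \<in> {F `` {((s' \<otimes> a'') \<oplus> (s'' \<otimes> a'), s'' \<otimes> s')} | a'' s'' a' s'. (a'', s'') \<in> rcls a s \<and> (a', s') \<in> rcls b t}"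
      using assms F_refl[OF assms(1,2)] F_refl[OF assms(3,4)] unfolding mem_rcls rcls_def by blast
  qed
  finally show ?thesis .
qed

lemma rcls_mult: assumes "a \<in> carrier R" "s \<in> S" "b \<in> carrier R" "t \<in> S"
  shows "rcls a s \<otimes>\<^bsub>L\<^esub> rcls b t = rcls (a \<otimes> b) (s \<otimes> t)"
proof -
  have "rcls a s \<otimes>\<^bsub>L\<^esub> rcls b t = \<Union>{F `` {(a'' \<otimes> a', s'' \<otimes> s')} | a'' s'' a' s'. (a'', s'') \<in> rcls a s \<and> (a', s') \<in> rcls b t}"
    unfolding loc_ring_def Let_def by simp
  also have "\<dots> = rcls (a \<otimes> b) (s \<otimes> t)"
  proof (rule Union_const)
    fix Y assume "Y \<in> {F `` {(a'' \<otimes> a', s'' \<otimes> s')} | a'' s'' a' s'. (a'', s'') \<in> rcls a s \<and> (a', s') \<in> rcls b t}"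
    then obtain a'' s'' a' s' where Y: "Y = rcls (a'' \<otimes> a') (s'' \<otimes> s')"
      and h: "((a,s),(a'',s'')) \<in> F" "((b,t),(a',s')) \<in> F" unfolding mem_rcls rcls_def by blast
    from mult_compat[OF h] show "Y = rcls (a \<otimes> b) (s \<otimes> t)" unfolding Y by (metis rcls_cong)
  next
    show "rcls (a \<otimes> b) (s \<otimes> t) \<in> {F `` {(a'' \<otimes> a', s'' \<otimes> s')} | a'' s'' a' s'. (a'', s'') \<in> rcls a s \<and> (a', s') \<in> rcls b t}"
      using assms F_refl[OF assms(1,2)] F_refl[OF assms(3,4)] unfolding mem_rcls rcls_def by blast
  qed
  finally show ?thesis .
qed


end

context locS begin

lemma L_cases2:
  assumes "x \<in> carrier L" "y \<in> carrier L"
  obtains a s b t where "a \<in> carrier R" "s \<in> S" "b \<in> carrier R" "t \<in> S" "x = rcls a s" "y = rcls b t"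
proof -
  obtain a s where 1: "a \<in> carrier R" "s \<in> S" "x = rcls a s" by (rule L_cases[OF assms(1)])
  obtain b t where 2: "b \<in> carrier R" "t \<in> S" "y = rcls b t" by (rule L_cases[OF assms(2)])
  show thesis by (rule that[OF 1(1,2) 2(1,2) 1(3) 2(3)])
qed

lemma L_cases3:
  assumes "x \<in> carrier L" "y \<in> carrier L" "z \<in> carrier L"
  obtains a s b t c u where "a \<in> carrier R" "s \<in> S" "b \<in> carrier R" "t \<in> S" "c \<in> carrier R" "u \<in> S"
      "x = rcls a s" "y = rcls b t" "z = rcls c u"
proof -
  obtain a s where 1: "a \<in> carrier R" "s \<in> S" "x = rcls a s" by (rule L_cases[OF assms(1)])
  obtain b t where 2: "b \<in> carrier R" "t \<in> S" "y = rcls b t" by (rule L_cases[OF assms(2)])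
  obtain c u where 3: "c \<in> carrier R" "u \<in> S" "z = rcls c u" by (rule L_cases[OF assms(3)])
  show thesis by (rule that[OF 1(1,2) 2(1,2) 3(1,2) 1(3) 2(3) 3(3)])
qed
lemma rcls_eqI2: "p = rcls a s \<Longrightarrow> q = rcls a' s' \<Longrightarrow> a \<in> carrier R \<Longrightarrow> s \<in> S \<Longrightarrow> a' \<in> carrier R \<Longrightarrow> s' \<in> S \<Longrightarrow>
   s' \<otimes> a = s \<otimes> a' \<Longrightarrow> p = q"
proof -
  assume h: "p = rcls a s" "q = rcls a' s'" "a \<in> carrier R" "s \<in> S" "a' \<in> carrier R" "s' \<in> S" "s' \<otimes> a = s \<otimes> a'"
  show "p = q" unfolding h(1,2) by (rule rcls_eqI[OF h(3-7)])
qed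

lemma cring_L: "cring L"
proof (rule cringI)
  show "abelian_group L"
  proof (rule abelian_groupI)
    fix x y assume "x \<in> carrier L" "y \<in> carrier L"
    then obtain a s b t where h: "a \<in> carrier R" "s \<in> S" "b \<in> carrier R" "t \<in> S" "x = rcls a s" "y = rcls b t"
      by (rule L_cases2)
    then show "x \<oplus>\<^bsub>L\<^esub> y \<in> carrier L" by (simp add: rcls_add rcls_in mult_S S_car)
  next
    show "\<zero>\<^bsub>L\<^esub> \<in> carrier L" by (simp add: zero_L rcls_in one_S)
  next
    fix x y z assume "x \<in> carrier L" "y \<in> carrier L" "z \<in> carrier L"
    then obtain a s b t c u where h: "a \<in> carrier R" "s \<in> S" "b \<in> carrier R" "t \<in> S" "c \<in> carrier R" "u \<in> S"
      "x = rcls a s" "y = rcls b t" "z = rcls c u"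
      by (rule L_cases3)
    have C: "s \<in> carrier R" "t \<in> carrier R" "u \<in> carrier R" using h S_car by auto
    show "x \<oplus>\<^bsub>L\<^esub> y \<oplus>\<^bsub>L\<^esub> z = x \<oplus>\<^bsub>L\<^esub> (y \<oplus>\<^bsub>L\<^esub> z)"
      unfolding h(7-9) by (insert h(1-6) C, simp add: rcls_add mult_S, (rule rcls_eqI, simp_all add: mult_S, algebra)?)
  next
    fix x y assume "x \<in> carrier L" "y \<in> carrier L"
    then obtain a s b t where h: "a \<in> carrier R" "s \<in> S" "b \<in> carrier R" "t \<in> S" "x = rcls a s" "y = rcls b t"
      by (rule L_cases2)
    have C: "s \<in> carrier R" "t \<in> carrier R" using h S_car by auto
    show "x \<oplus>\<^bsub>L\<^esub> y = y \<oplus>\<^bsub>L\<^esub> x"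
      unfolding h(5,6) by (insert h(1-4) C, simp add: rcls_add mult_S, (rule rcls_eqI, simp_all add: mult_S, algebra)?)
  next
    fix x assume "x \<in> carrier L"
    then obtain a s where h: "a \<in> carrier R" "s \<in> S" "x = rcls a s" by (rule L_cases)
    have C: "s \<in> carrier R" using h S_car by auto
    show "\<zero>\<^bsub>L\<^esub> \<oplus>\<^bsub>L\<^esub> x = x"
      unfolding h(3) by (insert h(1,2) C one_S, simp add: rcls_add zero_L mult_S, (rule rcls_eqI, simp_all add: mult_S, algebra)?)
  next
    fix x assume "x \<in> carrier L"
    then obtain a s where h: "a \<in> carrier R" "s \<in> S" "x = rcls a s" by (rule L_cases)
    have C: "s \<in> carrier R" using h S_car by auto
    have "rcls (\<ominus> a) s \<oplus>\<^bsub>L\<^esub> x = \<zero>\<^bsub>L\<^esub>"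
      unfolding h(3) by (insert h(1,2) C one_S, simp add: rcls_add zero_L mult_S, (rule rcls_eqI, simp_all add: mult_S, algebra)?)
    moreover have "rcls (\<ominus> a) s \<in> carrier L" using h by (simp add: rcls_in)
    ultimately show "\<exists>y\<in>carrier L. y \<oplus>\<^bsub>L\<^esub> x = \<zero>\<^bsub>L\<^esub>" by blast
  qed
next
  show "comm_monoid L"
  proof (rule comm_monoidI)
    fix x y assume "x \<in> carrier L" "y \<in> carrier L"
    then obtain a s b t where h: "a \<in> carrier R" "s \<in> S" "b \<in> carrier R" "t \<in> S" "x = rcls a s" "y = rcls b t"
      by (rule L_cases2)
    then show "x \<otimes>\<^bsub>L\<^esub> y \<in> carrier L" by (simp add: rcls_mult rcls_in mult_S S_car)
    have C: "s \<in> carrier R" "t \<in> carrier R" using h S_car by auto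
    show "x \<otimes>\<^bsub>L\<^esub> y = y \<otimes>\<^bsub>L\<^esub> x"
      unfolding h(5,6) by (insert h(1-4) C, simp add: rcls_mult mult_S, (rule rcls_eqI, simp_all add: mult_S, algebra)?)
  next
    show "\<one>\<^bsub>L\<^esub> \<in> carrier L" by (simp add: one_L rcls_in one_S)
  next
    fix x y z assume "x \<in> carrier L" "y \<in> carrier L" "z \<in> carrier L"
    then obtain a s b t c u where h: "a \<in> carrier R" "s \<in> S" "b \<in> carrier R" "t \<in> S" "c \<in> carrier R" "u \<in> S"
      "x = rcls a s" "y = rcls b t" "z = rcls c u"
      by (rule L_cases3)
    have C: "s \<in> carrier R" "t \<in> carrier R" "u \<in> carrier R" using h S_car by auto
    show "x \<otimes>\<^bsub>L\<^esub> y \<otimes>\<^bsub>L\<^esub> z = x \<otimes>\<^bsub>L\<^esub> (y \<otimes>\<^bsub>L\<^esub> z)"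
      unfolding h(7-9) by (insert h(1-6) C, simp add: rcls_mult mult_S, (rule rcls_eqI, simp_all add: mult_S, algebra)?)
  next
    fix x assume "x \<in> carrier L"
    then obtain a s where h: "a \<in> carrier R" "s \<in> S" "x = rcls a s" by (rule L_cases)
    have C: "s \<in> carrier R" using h S_car by auto
    show "\<one>\<^bsub>L\<^esub> \<otimes>\<^bsub>L\<^esub> x = x"
      unfolding h(3) by (insert h(1,2) C one_S, simp add: rcls_mult one_L mult_S, (rule rcls_eqI, simp_all add: mult_S, algebra)?)
  qed
next
  fix x y z assume "x \<in> carrier L" "y \<in> carrier L" "z \<in> carrier L"
  then obtain a s b t c u where h: "a \<in> carrier R" "s \<in> S" "b \<in> carrier R" "t \<in> S" "c \<in> carrier R" "u \<in> S"
    "x = rcls a s" "y = rcls b t" "z = rcls c u"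
    by (rule L_cases3)
  have C: "s \<in> carrier R" "t \<in> carrier R" "u \<in> carrier R" using h S_car by auto
  show "(x \<oplus>\<^bsub>L\<^esub> y) \<otimes>\<^bsub>L\<^esub> z = x \<otimes>\<^bsub>L\<^esub> z \<oplus>\<^bsub>L\<^esub> y \<otimes>\<^bsub>L\<^esub> z"
    unfolding h(7-9) by (insert h(1-6) C, simp add: rcls_mult rcls_add mult_S, (rule rcls_eqI, simp_all add: mult_S, algebra)?)
qed

end

lemma generate_cong_sub:
  assumes "carrier G = carrier G'" "monoid.mult G = monoid.mult G'" "one G = one G'"
    and "x \<in> generate G H"
  shows "x \<in> generate G' H"
proof -
  have invEq: "m_inv G = m_inv G'" unfolding m_inv_def using assms(1-3) by simp
  show ?thesis using assms(4)
  proof induction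
    case one then show ?case using assms(3) generate.one[of G' H] by simp
  next
    case (incl h) then show ?case by (rule generate.incl)
  next
    case (inv h) then show ?case using generate.inv[of h H G'] invEq by simp
  next
    case (eng h1 h2) then show ?case using generate.eng[of h1 G' H h2] assms(2) by simp
  qed
qed

lemma generate_cong:
  assumes "carrier G = carrier G'" "monoid.mult G = monoid.mult G'" "one G = one G'"
  shows "generate G H = generate G' H"
  using generate_cong_sub[OF assms] generate_cong_sub[OF assms[symmetric]] by blast

context locS begin

lemma sm1: "a \<in> carrier R \<Longrightarrow> b \<in> carrier R \<Longrightarrow> c \<in> carrier R \<Longrightarrow> m \<in> carrier M \<Longrightarrow> a \<otimes> b = c \<Longrightarrow>
  a \<odot>\<^bsub>M\<^esub> (b \<odot>\<^bsub>M\<^esub> m) = c \<odot>\<^bsub>M\<^esub> m"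
  by (simp add: smult_assoc1[symmetric])
lemma sm2: "a \<in> carrier R \<Longrightarrow> b \<in> carrier R \<Longrightarrow> c \<in> carrier R \<Longrightarrow> d \<in> carrier R \<Longrightarrow> m \<in> carrier M \<Longrightarrow> a \<otimes> b = c \<otimes> d \<Longrightarrow>
  a \<odot>\<^bsub>M\<^esub> (b \<odot>\<^bsub>M\<^esub> m) = c \<odot>\<^bsub>M\<^esub> (d \<odot>\<^bsub>M\<^esub> m)"
  by (simp add: smult_assoc1[symmetric])

lemma smultN_compat:
  assumes "((m,s),(m1,s1)) \<in> E" "r \<in> carrier R"
  shows "((r \<odot>\<^bsub>M\<^esub> m, s),(r \<odot>\<^bsub>M\<^esub> m1, s1)) \<in> E"
proof -
  from assms obtain u where *: "m \<in> carrier M" "s \<in> S" "m1 \<in> carrier M" "s1 \<in> S" "u \<in> S"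
    and e: "(u \<otimes> s1) \<odot>\<^bsub>M\<^esub> m = (u \<otimes> s) \<odot>\<^bsub>M\<^esub> m1" unfolding E_iff by auto
  have C: "s \<in> carrier R" "s1 \<in> carrier R" "u \<in> carrier R" using * S_car by auto
  have "(u \<otimes> s1) \<odot>\<^bsub>M\<^esub> (r \<odot>\<^bsub>M\<^esub> m) = r \<odot>\<^bsub>M\<^esub> ((u \<otimes> s1) \<odot>\<^bsub>M\<^esub> m)"
    using * C assms(2) by (intro smult_comm2) auto
  also have "\<dots> = r \<odot>\<^bsub>M\<^esub> ((u \<otimes> s) \<odot>\<^bsub>M\<^esub> m1)" by (simp only: e)
  also have "\<dots> = (u \<otimes> s) \<odot>\<^bsub>M\<^esub> (r \<odot>\<^bsub>M\<^esub> m1)"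
    using * C assms(2) by (intro smult_comm2) auto
  finally show ?thesis unfolding E_iff using * assms(2) by auto
qed

lemma smultN'_compat:
  assumes "((a,t),(a1,t1)) \<in> F" "((m,s),(m1,s1)) \<in> E"
  shows "((a \<odot>\<^bsub>M\<^esub> m, t \<otimes> s),(a1 \<odot>\<^bsub>M\<^esub> m1, t1 \<otimes> s1)) \<in> E"
proof -
  from assms obtain u v where *: "m \<in> carrier M" "s \<in> S" "m1 \<in> carrier M" "s1 \<in> S" "u \<in> S"
    "a \<in> carrier R" "t \<in> S" "a1 \<in> carrier R" "t1 \<in> S" "v \<in> S"
    and e: "(u \<otimes> s1) \<odot>\<^bsub>M\<^esub> m = (u \<otimes> s) \<odot>\<^bsub>M\<^esub> m1" and f: "v \<otimes> t1 \<otimes> a = v \<otimes> t \<otimes> a1"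
    unfolding E_iff F_iff by auto
  have C: "s \<in> carrier R" "s1 \<in> carrier R" "u \<in> carrier R" "t \<in> carrier R" "t1 \<in> carrier R" "v \<in> carrier R" "a \<in> carrier R" "a1 \<in> carrier R"
    using * S_car by auto
  have "((v \<otimes> u) \<otimes> (t1 \<otimes> s1)) \<odot>\<^bsub>M\<^esub> (a \<odot>\<^bsub>M\<^esub> m) = (v \<otimes> t1 \<otimes> a) \<odot>\<^bsub>M\<^esub> ((u \<otimes> s1) \<odot>\<^bsub>M\<^esub> m)"
    by (insert C *, rule sm2, simp_all, (algebra)?)
  also have "\<dots> = (v \<otimes> t \<otimes> a1) \<odot>\<^bsub>M\<^esub> ((u \<otimes> s) \<odot>\<^bsub>M\<^esub> m1)" by (simp only: e f)
  also have "\<dots> = ((v \<otimes> u) \<otimes> (t \<otimes> s)) \<odot>\<^bsub>M\<^esub> (a1 \<odot>\<^bsub>M\<^esub> m1)"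
    by (insert C *, rule sm2, simp_all, (algebra)?)
  finally show ?thesis unfolding E_iff using * C by (auto intro!: bexI[of _ "v \<otimes> u"] mult_S)
qed

lemma addN_compat:
  assumes "((m,s),(m1,s1)) \<in> E" "((n,t),(n1,t1)) \<in> E"
  shows "((t \<odot>\<^bsub>M\<^esub> m \<oplus>\<^bsub>M\<^esub> s \<odot>\<^bsub>M\<^esub> n, s \<otimes> t),(t1 \<odot>\<^bsub>M\<^esub> m1 \<oplus>\<^bsub>M\<^esub> s1 \<odot>\<^bsub>M\<^esub> n1, s1 \<otimes> t1)) \<in> E"
proof -
  from assms obtain u v where *: "m \<in> carrier M" "s \<in> S" "m1 \<in> carrier M" "s1 \<in> S" "u \<in> S"
    "n \<in> carrier M" "t \<in> S" "n1 \<in> carrier M" "t1 \<in> S" "v \<in> S"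
    and e: "(u \<otimes> s1) \<odot>\<^bsub>M\<^esub> m = (u \<otimes> s) \<odot>\<^bsub>M\<^esub> m1" and f: "(v \<otimes> t1) \<odot>\<^bsub>M\<^esub> n = (v \<otimes> t) \<odot>\<^bsub>M\<^esub> n1"
    unfolding E_iff by auto
  have C: "s \<in> carrier R" "s1 \<in> carrier R" "u \<in> carrier R" "t \<in> carrier R" "t1 \<in> carrier R" "v \<in> carrier R"
    using * S_car by auto
  have "((u \<otimes> v) \<otimes> (s1 \<otimes> t1)) \<odot>\<^bsub>M\<^esub> (t \<odot>\<^bsub>M\<^esub> m \<oplus>\<^bsub>M\<^esub> s \<odot>\<^bsub>M\<^esub> n)
     = ((u \<otimes> v) \<otimes> (s1 \<otimes> t1)) \<odot>\<^bsub>M\<^esub> (t \<odot>\<^bsub>M\<^esub> m) \<oplus>\<^bsub>M\<^esub> ((u \<otimes> v) \<otimes> (s1 \<otimes> t1)) \<odot>\<^bsub>M\<^esub> (s \<odot>\<^bsub>M\<^esub> n)"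
    using * C by (simp add: smult_r_distr)
  also have "((u \<otimes> v) \<otimes> (s1 \<otimes> t1)) \<odot>\<^bsub>M\<^esub> (t \<odot>\<^bsub>M\<^esub> m) = (v \<otimes> t1 \<otimes> t) \<odot>\<^bsub>M\<^esub> ((u \<otimes> s1) \<odot>\<^bsub>M\<^esub> m)"
    by (insert C *, rule sm2, simp_all, (algebra)?)
  also have "((u \<otimes> v) \<otimes> (s1 \<otimes> t1)) \<odot>\<^bsub>M\<^esub> (s \<odot>\<^bsub>M\<^esub> n) = (u \<otimes> s1 \<otimes> s) \<odot>\<^bsub>M\<^esub> ((v \<otimes> t1) \<odot>\<^bsub>M\<^esub> n)"
    by (insert C *, rule sm2, simp_all, (algebra)?)
  also note e also note f
  also have "(v \<otimes> t1 \<otimes> t) \<odot>\<^bsub>M\<^esub> ((u \<otimes> s) \<odot>\<^bsub>M\<^esub> m1) = ((u \<otimes> v) \<otimes> (s \<otimes> t)) \<odot>\<^bsub>M\<^esub> (t1 \<odot>\<^bsub>M\<^esub> m1)"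
    by (insert C *, rule sm2, simp_all, (algebra)?)
  also have "(u \<otimes> s1 \<otimes> s) \<odot>\<^bsub>M\<^esub> ((v \<otimes> t) \<odot>\<^bsub>M\<^esub> n1) = ((u \<otimes> v) \<otimes> (s \<otimes> t)) \<odot>\<^bsub>M\<^esub> (s1 \<odot>\<^bsub>M\<^esub> n1)"
    by (insert C *, rule sm2, simp_all, (algebra)?)
  also have "((u \<otimes> v) \<otimes> (s \<otimes> t)) \<odot>\<^bsub>M\<^esub> (t1 \<odot>\<^bsub>M\<^esub> m1) \<oplus>\<^bsub>M\<^esub> ((u \<otimes> v) \<otimes> (s \<otimes> t)) \<odot>\<^bsub>M\<^esub> (s1 \<odot>\<^bsub>M\<^esub> n1)
     = ((u \<otimes> v) \<otimes> (s \<otimes> t)) \<odot>\<^bsub>M\<^esub> (t1 \<odot>\<^bsub>M\<^esub> m1 \<oplus>\<^bsub>M\<^esub> s1 \<odot>\<^bsub>M\<^esub> n1)"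
    using * C by (simp add: smult_r_distr)
  finally show ?thesis unfolding E_iff using * C by (auto intro!: bexI[of _ "u \<otimes> v"] mult_S)
qed


lemma carrier_N: "carrier N = (carrier M \<times> S) // E" unfolding loc_module_def Let_def by simp
lemma carrier_N': "carrier N' = (carrier M \<times> S) // E" unfolding loc_module_loc_def Let_def by simp
lemma zero_N: "\<zero>\<^bsub>N\<^esub> = cls \<zero>\<^bsub>M\<^esub> \<one>" unfolding loc_module_def Let_def cls_def by simp
lemma add_NN': "Ring.ring.add N = Ring.ring.add N'"
  unfolding loc_module_def loc_module_loc_def Let_def by simp
lemma zero_NN': "Ring.ring.zero N = Ring.ring.zero N'"
  unfolding loc_module_def loc_module_loc_def Let_def by simp

lemma cls_in: "m \<in> carrier M \<Longrightarrow> s \<in> S \<Longrightarrow> cls m s \<in> carrier N"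
  unfolding carrier_N cls_def by (auto intro: quotientI)
lemma N_cases: assumes "x \<in> carrier N"
  obtains m s where "m \<in> carrier M" "s \<in> S" "x = cls m s"
  using assms unfolding carrier_N cls_def by (auto elim!: quotientE)

lemma cls_smult: assumes "r \<in> carrier R" "m \<in> carrier M" "s \<in> S"
  shows "r \<odot>\<^bsub>N\<^esub> cls m s = cls (r \<odot>\<^bsub>M\<^esub> m) s"
proof -
  have "r \<odot>\<^bsub>N\<^esub> cls m s = \<Union>{E `` {(r \<odot>\<^bsub>M\<^esub> m', s')} | m' s'. (m', s') \<in> cls m s}"
    unfolding loc_module_def Let_def by simp
  also have "\<dots> = cls (r \<odot>\<^bsub>M\<^esub> m) s"
  proof (rule Union_const)
    fix Y assume "Y \<in> {E `` {(r \<odot>\<^bsub>M\<^esub> m', s')} | m' s'. (m', s') \<in> cls m s}"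
    then obtain m' s' where Y: "Y = cls (r \<odot>\<^bsub>M\<^esub> m') s'" and h: "((m,s),(m',s')) \<in> E"
      unfolding mem_cls cls_def by blast
    from smultN_compat[OF h assms(1)] show "Y = cls (r \<odot>\<^bsub>M\<^esub> m) s" unfolding Y by (metis cls_cong)
  next
    show "cls (r \<odot>\<^bsub>M\<^esub> m) s \<in> {E `` {(r \<odot>\<^bsub>M\<^esub> m', s')} | m' s'. (m', s') \<in> cls m s}"
      using E_refl[OF assms(2,3)] unfolding mem_cls cls_def by blast
  qed
  finally show ?thesis .
qed

lemma cls_smult': assumes "a \<in> carrier R" "t \<in> S" "m \<in> carrier M" "s \<in> S"
  shows "rcls a t \<odot>\<^bsub>N'\<^esub> cls m s = cls (a \<odot>\<^bsub>M\<^esub> m) (t \<otimes> s)"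
proof -
  have "rcls a t \<odot>\<^bsub>N'\<^esub> cls m s = \<Union>{E `` {(a' \<odot>\<^bsub>M\<^esub> m', t' \<otimes> s')} | a' t' m' s'. (a', t') \<in> rcls a t \<and> (m', s') \<in> cls m s}"
    unfolding loc_module_loc_def Let_def by simp
  also have "\<dots> = cls (a \<odot>\<^bsub>M\<^esub> m) (t \<otimes> s)"
  proof (rule Union_const)
    fix Y assume "Y \<in> {E `` {(a' \<odot>\<^bsub>M\<^esub> m', t' \<otimes> s')} | a' t' m' s'. (a', t') \<in> rcls a t \<and> (m', s') \<in> cls m s}"
    then obtain a' t' m' s' where Y: "Y = cls (a' \<odot>\<^bsub>M\<^esub> m') (t' \<otimes> s')" and h: "((a,t),(a',t')) \<in> F" "((m,s),(m',s')) \<in> E"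
      unfolding mem_cls cls_def mem_rcls rcls_def by blast
    from smultN'_compat[OF h] show "Y = cls (a \<odot>\<^bsub>M\<^esub> m) (t \<otimes> s)" unfolding Y by (metis cls_cong)
  next
    show "cls (a \<odot>\<^bsub>M\<^esub> m) (t \<otimes> s) \<in> {E `` {(a' \<odot>\<^bsub>M\<^esub> m', t' \<otimes> s')} | a' t' m' s'. (a', t') \<in> rcls a t \<and> (m', s') \<in> cls m s}"
      using E_refl[OF assms(3,4)] F_refl[OF assms(1,2)] unfolding mem_cls cls_def mem_rcls rcls_def by blast
  qed
  finally show ?thesis .
qed

lemma cls_add: assumes "m \<in> carrier M" "s \<in> S" "n \<in> carrier M" "t \<in> S"
  shows "cls m s \<oplus>\<^bsub>N\<^esub> cls n t = cls (t \<odot>\<^bsub>M\<^esub> m \<oplus>\<^bsub>M\<^esub> s \<odot>\<^bsub>M\<^esub> n) (s \<otimes> t)"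
proof -
  have "cls m s \<oplus>\<^bsub>N\<^esub> cls n t = \<Union>{E `` {((s' \<odot>\<^bsub>M\<^esub> m') \<oplus>\<^bsub>M\<^esub> (s'' \<odot>\<^bsub>M\<^esub> n'), s'' \<otimes> s')} | m' s'' n' s'. (m', s'') \<in> cls m s \<and> (n', s') \<in> cls n t}"
    unfolding loc_module_def Let_def by simp
  also have "\<dots> = cls (t \<odot>\<^bsub>M\<^esub> m \<oplus>\<^bsub>M\<^esub> s \<odot>\<^bsub>M\<^esub> n) (s \<otimes> t)"
  proof (rule Union_const)
    fix Y assume "Y \<in> {E `` {((s' \<odot>\<^bsub>M\<^esub> m') \<oplus>\<^bsub>M\<^esub> (s'' \<odot>\<^bsub>M\<^esub> n'), s'' \<otimes> s')} | m' s'' n' s'. (m', s'') \<in> cls m s \<and> (n', s') \<in> cls n t}"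
    then obtain m' s'' n' s' where Y: "Y = cls ((s' \<odot>\<^bsub>M\<^esub> m') \<oplus>\<^bsub>M\<^esub> (s'' \<odot>\<^bsub>M\<^esub> n')) (s'' \<otimes> s')"
      and h: "((m,s),(m',s'')) \<in> E" "((n,t),(n',s')) \<in> E" unfolding mem_cls cls_def by blast
    from addN_compat[OF h] show "Y = cls (t \<odot>\<^bsub>M\<^esub> m \<oplus>\<^bsub>M\<^esub> s \<odot>\<^bsub>M\<^esub> n) (s \<otimes> t)" unfolding Y by (metis cls_cong)
  next
    show "cls (t \<odot>\<^bsub>M\<^esub> m \<oplus>\<^bsub>M\<^esub> s \<odot>\<^bsub>M\<^esub> n) (s \<otimes> t) \<in> {E `` {((s' \<odot>\<^bsub>M\<^esub> m') \<oplus>\<^bsub>M\<^esub> (s'' \<odot>\<^bsub>M\<^esub> n'), s'' \<otimes> s')} | m' s'' n' s'. (m', s'') \<in> cls m s \<and> (n', s') \<in> cls n t}"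
      using E_refl[OF assms(1,2)] E_refl[OF assms(3,4)] unfolding mem_cls cls_def by blast
  qed
  finally show ?thesis .
qed

end


lemma (in cring) ideal_by_closure:
  assumes "I \<subseteq> carrier R" "\<zero> \<in> I" "\<And>a b. a \<in> I \<Longrightarrow> b \<in> I \<Longrightarrow> a \<oplus> b \<in> I"
    "\<And>a x. a \<in> I \<Longrightarrow> x \<in> carrier R \<Longrightarrow> x \<otimes> a \<in> I"
  shows "ideal I R"
proof (rule idealI)
  show "ring R" by (rule ring_axioms)
  show "subgroup I (add_monoid R)"
  proof (rule add.subgroupI)
    show "I \<subseteq> carrier R" using assms(1) by simp
    show "I \<noteq> {}" using assms(2) by blast
    fix a assume a: "a \<in> I"
    then have ac: "a \<in> carrier R" using assms(1) by blast
    have "\<ominus> a = (\<ominus> \<one>) \<otimes> a" using ac by (simp add: l_minus)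
    moreover have "(\<ominus> \<one>) \<otimes> a \<in> I" using assms(4)[OF a] by simp
    ultimately show "\<ominus> a \<in> I" by simp
  next
    fix a b assume "a \<in> I" "b \<in> I"
    then show "a \<oplus> b \<in> I" using assms(3) by simp
  qed
  fix a x assume a: "a \<in> I" and x: "x \<in> carrier R"
  show "x \<otimes> a \<in> I" using assms(4)[OF a x] .
  have "a \<otimes> x = x \<otimes> a" using a x assms(1) by (intro m_comm) auto
  then show "a \<otimes> x \<in> I" using assms(4)[OF a x] by simp
qed

context locS begin

definition "SI I = {rcls b t | b t. b \<in> I \<and> t \<in> S}"

lemma ring_L: "ring L" using cring_L by (rule cring.axioms)

lemma SI_ideal: assumes "ideal I R" shows "ideal (SI I) L"
proof (rule cring.ideal_by_closure[OF cring_L])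
  have Ic: "I \<subseteq> carrier R" using assms by (rule ideal.axioms(1)[THEN additive_subgroup.a_subset])
  show "SI I \<subseteq> carrier L" unfolding SI_def using Ic by (auto intro!: rcls_in)
  show "\<zero>\<^bsub>L\<^esub> \<in> SI I" unfolding SI_def zero_L using one_S additive_subgroup.zero_closed[OF ideal.axioms(1)[OF assms]] by blast
  fix a b assume "a \<in> SI I" "b \<in> SI I"
  then obtain x t y u where h: "x \<in> I" "t \<in> S" "y \<in> I" "u \<in> S" "a = rcls x t" "b = rcls y u"
    unfolding SI_def by blast
  have "a \<oplus>\<^bsub>L\<^esub> b = rcls (u \<otimes> x \<oplus> t \<otimes> y) (t \<otimes> u)" unfolding h(5,6)
    using h Ic by (intro rcls_add) auto
  moreover have "u \<otimes> x \<oplus> t \<otimes> y \<in> I" using h S_car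
    by (intro additive_subgroup.a_closed[OF ideal.axioms(1)[OF assms]] ideal.I_l_closed[OF assms]) auto
  ultimately show "a \<oplus>\<^bsub>L\<^esub> b \<in> SI I" unfolding SI_def using h mult_S by blast
next
  have Ic: "I \<subseteq> carrier R" using assms by (rule ideal.axioms(1)[THEN additive_subgroup.a_subset])
  fix a x assume "a \<in> SI I" "x \<in> carrier L"
  then obtain y u where h1: "y \<in> I" "u \<in> S" "a = rcls y u"
    unfolding SI_def by blast
  obtain c v where h2: "c \<in> carrier R" "v \<in> S" "x = rcls c v" by (rule L_cases[OF \<open>x \<in> carrier L\<close>])
  note h = h1 h2
  have "x \<otimes>\<^bsub>L\<^esub> a = rcls (c \<otimes> y) (v \<otimes> u)" unfolding h(3,6)
    using h Ic by (intro rcls_mult) auto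
  moreover have "c \<otimes> y \<in> I" using h by (intro ideal.I_l_closed[OF assms]) auto
  ultimately show "x \<otimes>\<^bsub>L\<^esub> a \<in> SI I" unfolding SI_def using h mult_S by blast
qed


lemma Ic_of: "ideal I R \<Longrightarrow> I \<subseteq> carrier R"
  by (rule ideal.axioms(1)[THEN additive_subgroup.a_subset])

lemma rcls_one_mult: "a \<in> carrier R \<Longrightarrow> t \<in> S \<Longrightarrow> rcls \<one> t \<otimes>\<^bsub>L\<^esub> rcls a \<one> = rcls a t"
proof -
  assume a: "a \<in> carrier R" and t: "t \<in> S"
  have tc: "t \<in> carrier R" using t S_car by auto
  have "rcls \<one> t \<otimes>\<^bsub>L\<^esub> rcls a \<one> = rcls (\<one> \<otimes> a) (t \<otimes> \<one>)" using a t one_S by (intro rcls_mult) auto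
  also have "\<dots> = rcls a t" using a tc by simp
  finally show ?thesis .
qed

lemma rcls_t_mult: "a \<in> carrier R \<Longrightarrow> t \<in> S \<Longrightarrow> rcls t \<one> \<otimes>\<^bsub>L\<^esub> rcls a t = rcls a \<one>"
proof -
  assume a: "a \<in> carrier R" and t: "t \<in> S"
  have tc: "t \<in> carrier R" using t S_car by auto
  have "rcls t \<one> \<otimes>\<^bsub>L\<^esub> rcls a t = rcls (t \<otimes> a) (\<one> \<otimes> t)" using a t one_S tc by (intro rcls_mult) auto
  also have "\<dots> = rcls a \<one>" using a tc t one_S by (intro rcls_eqI) (auto simp: m_assoc)
  finally show ?thesis .
qed

lemma SI_sub_ideal:
  assumes K: "ideal K L" and A: "A \<subseteq> carrier R" and AK: "\<And>a. a \<in> A \<Longrightarrow> rcls a \<one> \<in> K"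
  shows "SI (Idl A) \<subseteq> K"
proof -
  let ?J = "{b \<in> carrier R. rcls b \<one> \<in> K}"
  have Ksub: "additive_subgroup K L" using K by (rule ideal.axioms(1))
  have "ideal ?J R"
  proof (rule ideal_by_closure)
    show "?J \<subseteq> carrier R" by auto
    show "\<zero> \<in> ?J" using additive_subgroup.zero_closed[OF Ksub] zero_L by simp
  next
    fix a b assume a: "a \<in> ?J" and b: "b \<in> ?J"
    have "rcls a \<one> \<oplus>\<^bsub>L\<^esub> rcls b \<one> = rcls (\<one> \<otimes> a \<oplus> \<one> \<otimes> b) (\<one> \<otimes> \<one>)"
      using a b one_S by (intro rcls_add) auto
    also have "\<dots> = rcls (a \<oplus> b) \<one>" using a b by simp
    finally have eq: "rcls a \<one> \<oplus>\<^bsub>L\<^esub> rcls b \<one> = rcls (a \<oplus> b) \<one>" .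
    have "rcls a \<one> \<oplus>\<^bsub>L\<^esub> rcls b \<one> \<in> K" using additive_subgroup.a_closed[OF Ksub, of "rcls a \<one>" "rcls b \<one>"] a b by simp
    then have "rcls (a \<oplus> b) \<one> \<in> K" by (simp only: eq)
    then show "a \<oplus> b \<in> ?J" using a b by simp
  next
    fix a x assume a: "a \<in> ?J" and x: "x \<in> carrier R"
    have "rcls x \<one> \<otimes>\<^bsub>L\<^esub> rcls a \<one> = rcls (x \<otimes> a) (\<one> \<otimes> \<one>)"
      using a x one_S by (intro rcls_mult) auto
    also have "\<dots> = rcls (x \<otimes> a) \<one>" by simp
    finally have "rcls (x \<otimes> a) \<one> \<in> K" using a ideal.I_l_closed[OF K, of "rcls a \<one>" "rcls x \<one>"] rcls_in[OF x one_S] by simp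
    then show "x \<otimes> a \<in> ?J" using a x by simp
  qed
  then have I: "Idl A \<subseteq> ?J" by (rule genideal_minimal) (use AK A in auto)
  show ?thesis
  proof
    fix y assume "y \<in> SI (Idl A)"
    then obtain b t where h: "b \<in> Idl A" "t \<in> S" "y = rcls b t" unfolding SI_def by blast
    have b: "b \<in> carrier R" "rcls b \<one> \<in> K" using I h by auto
    have "rcls \<one> t \<otimes>\<^bsub>L\<^esub> rcls b \<one> \<in> K" using ideal.I_l_closed[OF K b(2)] rcls_in[OF one_closed h(2)] by simp
    then show "y \<in> K" using rcls_one_mult[OF b(1) h(2)] h(3) by simp
  qed
qed

lemma Idl_L_eq:
  assumes P: "P \<subseteq> carrier R \<times> S"
  shows "Idl\<^bsub>L\<^esub> ((\<lambda>p. rcls (fst p) (snd p)) ` P) = SI (Idl (fst ` P))"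
proof
  have A: "fst ` P \<subseteq> carrier R" using P by auto
  have id: "ideal (SI (Idl (fst ` P))) L" by (rule SI_ideal[OF genideal_ideal[OF A]])
  have sub: "(\<lambda>p. rcls (fst p) (snd p)) ` P \<subseteq> SI (Idl (fst ` P))"
  proof
    fix y assume "y \<in> (\<lambda>p. rcls (fst p) (snd p)) ` P"
    then obtain p where p: "p \<in> P" "y = rcls (fst p) (snd p)" by blast
    have "fst p \<in> fst ` P" using p(1) by (rule imageI)
    then have f: "fst p \<in> Idl (fst ` P)" using genideal_self[OF A] by (rule subsetD[rotated])
    have sn: "snd p \<in> S" using p(1) P by (auto simp: mem_Times_iff)
    show "y \<in> SI (Idl (fst ` P))" unfolding SI_def p(2) using f sn by (intro CollectI exI conjI) (rule refl)
  qed
  show "Idl\<^bsub>L\<^esub> ((\<lambda>p. rcls (fst p) (snd p)) ` P) \<subseteq> SI (Idl (fst ` P))"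
    by (rule ring.genideal_minimal[OF ring_L id sub])
next
  have A: "fst ` P \<subseteq> carrier R" using P by auto
  have "SI (Idl (fst ` P)) \<subseteq> \<Inter>{K. ideal K L \<and> (\<lambda>p. rcls (fst p) (snd p)) ` P \<subseteq> K}"
  proof (rule Inter_greatest)
    fix K assume "K \<in> {K. ideal K L \<and> (\<lambda>p. rcls (fst p) (snd p)) ` P \<subseteq> K}"
    then have K: "ideal K L" and BK: "(\<lambda>p. rcls (fst p) (snd p)) ` P \<subseteq> K" by auto
    show "SI (Idl (fst ` P)) \<subseteq> K"
    proof (rule SI_sub_ideal[OF K A])
      fix a assume "a \<in> fst ` P"
      then obtain p where pp: "p \<in> P" "a = fst p" by blast
      obtain t where t: "t = snd p" by simp
      have at: "(a,t) \<in> P" using pp t by simp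
      have h1: "a \<in> carrier R" "t \<in> S" using at P by auto
      have "rcls a t \<in> (\<lambda>p. rcls (fst p) (snd p)) ` P" using at by (rule rev_image_eqI) simp
      then have h2: "rcls a t \<in> K" using BK by (rule subsetD[rotated])
      have "rcls t \<one> \<otimes>\<^bsub>L\<^esub> rcls a t \<in> K" using ideal.I_l_closed[OF K h2] rcls_in[OF S_car[OF h1(2)] one_S] by simp
      then show "rcls a \<one> \<in> K" using rcls_t_mult[OF h1] by simp
    qed
  qed
  then show "SI (Idl (fst ` P)) \<subseteq> Idl\<^bsub>L\<^esub> ((\<lambda>p. rcls (fst p) (snd p)) ` P)"
    by (simp only: genideal_def)
qed

end

context locS begin
lemma cls_a_eq: assumes "a \<in> carrier R" "t \<in> S" "m \<in> carrier M" "s \<in> S"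
  shows "cls (a \<odot>\<^bsub>M\<^esub> m) s = cls (a \<odot>\<^bsub>M\<^esub> (t \<odot>\<^bsub>M\<^esub> m)) (t \<otimes> s)"
proof (rule cls_eqI)
  have C: "t \<in> carrier R" "s \<in> carrier R" using assms S_car by auto
  show "a \<odot>\<^bsub>M\<^esub> m \<in> carrier M" "a \<odot>\<^bsub>M\<^esub> (t \<odot>\<^bsub>M\<^esub> m) \<in> carrier M" using assms C by auto
  show "s \<in> S" "t \<otimes> s \<in> S" using assms mult_S by auto
  have "(t \<otimes> s) \<odot>\<^bsub>M\<^esub> (a \<odot>\<^bsub>M\<^esub> m) = ((t \<otimes> s) \<otimes> a) \<odot>\<^bsub>M\<^esub> m"
    using assms C by (intro sm1) auto
  also have "\<dots> = (s \<otimes> (a \<otimes> t)) \<odot>\<^bsub>M\<^esub> m" using assms C by (simp add: m_ac)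
  also have "\<dots> = s \<odot>\<^bsub>M\<^esub> ((a \<otimes> t) \<odot>\<^bsub>M\<^esub> m)" using assms C by (intro sm1[symmetric]) auto
  also have "(a \<otimes> t) \<odot>\<^bsub>M\<^esub> m = a \<odot>\<^bsub>M\<^esub> (t \<odot>\<^bsub>M\<^esub> m)" using assms C by (intro sm1[symmetric]) auto
  finally show "(t \<otimes> s) \<odot>\<^bsub>M\<^esub> (a \<odot>\<^bsub>M\<^esub> m) = s \<odot>\<^bsub>M\<^esub> (a \<odot>\<^bsub>M\<^esub> (t \<odot>\<^bsub>M\<^esub> m))" .
qed

lemma image_eq_W: assumes "a \<in> carrier R" "t \<in> S"
  shows "(\<lambda>x. rcls a t \<odot>\<^bsub>N'\<^esub> x) ` carrier N' = (\<lambda>x. a \<odot>\<^bsub>N\<^esub> x) ` carrier N"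
proof
  have tc: "t \<in> carrier R" using assms S_car by auto
  show "(\<lambda>x. rcls a t \<odot>\<^bsub>N'\<^esub> x) ` carrier N' \<subseteq> (\<lambda>x. a \<odot>\<^bsub>N\<^esub> x) ` carrier N"
  proof
    fix y assume "y \<in> (\<lambda>x. rcls a t \<odot>\<^bsub>N'\<^esub> x) ` carrier N'"
    then obtain x where x: "x \<in> carrier N" "y = rcls a t \<odot>\<^bsub>N'\<^esub> x" using carrier_N carrier_N' by auto
    obtain m s where ms: "m \<in> carrier M" "s \<in> S" "x = cls m s" by (rule N_cases[OF x(1)])
    have "y = cls (a \<odot>\<^bsub>M\<^esub> m) (t \<otimes> s)" using x ms assms cls_smult' by simp
    also have "\<dots> = a \<odot>\<^bsub>N\<^esub> cls m (t \<otimes> s)" using ms assms mult_S by (simp add: cls_smult)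
    finally show "y \<in> (\<lambda>x. a \<odot>\<^bsub>N\<^esub> x) ` carrier N" using cls_in ms assms mult_S by blast
  qed
  show "(\<lambda>x. a \<odot>\<^bsub>N\<^esub> x) ` carrier N \<subseteq> (\<lambda>x. rcls a t \<odot>\<^bsub>N'\<^esub> x) ` carrier N'"
  proof
    fix y assume "y \<in> (\<lambda>x. a \<odot>\<^bsub>N\<^esub> x) ` carrier N"
    then obtain x where x: "x \<in> carrier N" "y = a \<odot>\<^bsub>N\<^esub> x" by auto
    obtain m s where ms: "m \<in> carrier M" "s \<in> S" "x = cls m s" by (rule N_cases[OF x(1)])
    have "y = cls (a \<odot>\<^bsub>M\<^esub> m) s" using x ms assms cls_smult by simp
    also have "\<dots> = cls (a \<odot>\<^bsub>M\<^esub> (t \<odot>\<^bsub>M\<^esub> m)) (t \<otimes> s)" by (rule cls_a_eq[OF assms ms(1,2)])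
    also have "\<dots> = rcls a t \<odot>\<^bsub>N'\<^esub> cls (t \<odot>\<^bsub>M\<^esub> m) s" using ms assms tc by (simp add: cls_smult')
    finally show "y \<in> (\<lambda>x. rcls a t \<odot>\<^bsub>N'\<^esub> x) ` carrier N'"
      using cls_in[of "t \<odot>\<^bsub>M\<^esub> m" s] ms tc carrier_N carrier_N' by auto
  qed
qed

lemma W_rcls: assumes "a \<in> carrier R" "t \<in> S"
  shows "rcls a t \<in> W_set L N' \<longleftrightarrow> a \<in> W_set R N"
  unfolding W_set_def using image_eq_W[OF assms] rcls_in[OF assms] assms carrier_N carrier_N' by auto

lemma SI_W: assumes "I \<subseteq> carrier R"
  shows "SI I \<subseteq> W_set L N' \<longleftrightarrow> I \<subseteq> W_set R N"
proof
  assume h: "SI I \<subseteq> W_set L N'"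
  show "I \<subseteq> W_set R N"
  proof
    fix b assume b: "b \<in> I"
    then have "rcls b \<one> \<in> SI I" unfolding SI_def using one_S by blast
    then show "b \<in> W_set R N" using h W_rcls[of b \<one>] b assms one_S by auto
  qed
next
  assume h: "I \<subseteq> W_set R N"
  show "SI I \<subseteq> W_set L N'"
  proof
    fix y assume "y \<in> SI I"
    then obtain b t where bt: "b \<in> I" "t \<in> S" "y = rcls b t" unfolding SI_def by blast
    then show "y \<in> W_set L N'" using W_rcls[of b t] h assms by auto
  qed
qed

lemma gens_eq: assumes "I \<subseteq> carrier R"
  shows "{a \<odot>\<^bsub>N\<^esub> m | a m. a \<in> I \<and> m \<in> carrier N} = {a \<odot>\<^bsub>N'\<^esub> m | a m. a \<in> SI I \<and> m \<in> carrier N'}"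
proof
  show "{a \<odot>\<^bsub>N\<^esub> m | a m. a \<in> I \<and> m \<in> carrier N} \<subseteq> {a \<odot>\<^bsub>N'\<^esub> m | a m. a \<in> SI I \<and> m \<in> carrier N'}"
  proof
    fix y assume "y \<in> {a \<odot>\<^bsub>N\<^esub> m | a m. a \<in> I \<and> m \<in> carrier N}"
    then obtain a x where h: "a \<in> I" "x \<in> carrier N" "y = a \<odot>\<^bsub>N\<^esub> x" by blast
    obtain m s where ms: "m \<in> carrier M" "s \<in> S" "x = cls m s" by (rule N_cases[OF h(2)])
    have ac: "a \<in> carrier R" using h assms by auto
    have "y = cls (a \<odot>\<^bsub>M\<^esub> m) s" using h ms ac by (simp add: cls_smult)
    also have "\<dots> = rcls a \<one> \<odot>\<^bsub>N'\<^esub> cls m s" using ms ac one_S S_car by (simp add: cls_smult')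
    finally have "y = rcls a \<one> \<odot>\<^bsub>N'\<^esub> x" using ms by simp
    moreover have "rcls a \<one> \<in> SI I" unfolding SI_def using h one_S by blast
    ultimately show "y \<in> {a \<odot>\<^bsub>N'\<^esub> m | a m. a \<in> SI I \<and> m \<in> carrier N'}"
      using h(2) carrier_N carrier_N' by auto
  qed
  show "{a \<odot>\<^bsub>N'\<^esub> m | a m. a \<in> SI I \<and> m \<in> carrier N'} \<subseteq> {a \<odot>\<^bsub>N\<^esub> m | a m. a \<in> I \<and> m \<in> carrier N}"
  proof
    fix y assume "y \<in> {a \<odot>\<^bsub>N'\<^esub> m | a m. a \<in> SI I \<and> m \<in> carrier N'}"
    then obtain j x where h: "j \<in> SI I" "x \<in> carrier N" "y = j \<odot>\<^bsub>N'\<^esub> x" using carrier_N carrier_N' by auto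
    obtain b t where bt: "b \<in> I" "t \<in> S" "j = rcls b t" using h(1) unfolding SI_def by blast
    obtain m s where ms: "m \<in> carrier M" "s \<in> S" "x = cls m s" by (rule N_cases[OF h(2)])
    have bc: "b \<in> carrier R" using bt assms by auto
    have "y = cls (b \<odot>\<^bsub>M\<^esub> m) (t \<otimes> s)" using h bt ms bc by (simp add: cls_smult')
    also have "\<dots> = b \<odot>\<^bsub>N\<^esub> cls m (t \<otimes> s)" using ms bt bc mult_S by (simp add: cls_smult)
    finally show "y \<in> {a \<odot>\<^bsub>N\<^esub> m | a m. a \<in> I \<and> m \<in> carrier N}"
      using bt ms mult_S cls_in by blast
  qed
qed

lemma ideal_smult_eq: assumes "I \<subseteq> carrier R"
  shows "ideal_smult N I = ideal_smult N' (SI I)"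
  unfolding ideal_smult_def gens_eq[OF assms]
  by (rule generate_cong) (simp_all add: carrier_N carrier_N' add_NN' zero_NN')

end

context locS begin

lemma Idl_sub: "A \<subseteq> carrier R \<Longrightarrow> Idl A \<subseteq> carrier R"
  using genideal_ideal Ic_of by blast

lemma part1: "dual_prop_A R N \<longleftrightarrow> dual_prop_A L N'"
proof
  assume a: "dual_prop_A R N"
  show "dual_prop_A L N'"
    unfolding dual_prop_A_def
  proof (intro allI impI, elim conjE)
    fix J assume fg: "fg_ideal L J" and JW: "J \<subseteq> W_set L N'"
    then obtain B where B: "finite B" "B \<subseteq> carrier L" "J = Idl\<^bsub>L\<^esub> B" unfolding fg_ideal_def by blast
    define rep where "rep = (\<lambda>\<beta>. SOME p. p \<in> carrier R \<times> S \<and> \<beta> = rcls (fst p) (snd p))"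
    have rep: "rep \<beta> \<in> carrier R \<times> S \<and> \<beta> = rcls (fst (rep \<beta>)) (snd (rep \<beta>))" if bL: "\<beta> \<in> carrier L" for \<beta>
    proof -
      obtain a s where h: "a \<in> carrier R" "s \<in> S" "\<beta> = rcls a s" by (rule L_cases[OF bL])
      have "\<exists>p. p \<in> carrier R \<times> S \<and> \<beta> = rcls (fst p) (snd p)"
        using h by (intro exI[of _ "(a,s)"]) simp
      then show ?thesis unfolding rep_def by (rule someI_ex)
    qed
    define P where "P = rep ` B"
    have P: "P \<subseteq> carrier R \<times> S" unfolding P_def using rep B(2) by blast
    have BP: "B = (\<lambda>p. rcls (fst p) (snd p)) ` P"
    proof
      show "B \<subseteq> (\<lambda>p. rcls (fst p) (snd p)) ` P"
      proof
        fix \<beta> assume "\<beta> \<in> B"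
        then have "rep \<beta> \<in> P" "\<beta> = rcls (fst (rep \<beta>)) (snd (rep \<beta>))" unfolding P_def using rep B(2) by auto
        then show "\<beta> \<in> (\<lambda>p. rcls (fst p) (snd p)) ` P" by (rule rev_image_eqI)
      qed
      show "(\<lambda>p. rcls (fst p) (snd p)) ` P \<subseteq> B"
      proof
        fix y assume "y \<in> (\<lambda>p. rcls (fst p) (snd p)) ` P"
        then obtain \<beta> where "\<beta> \<in> B" "y = rcls (fst (rep \<beta>)) (snd (rep \<beta>))" unfolding P_def by auto
        then show "y \<in> B" using rep B(2) by auto
      qed
    qed
    let ?A = "fst ` P"
    have A: "?A \<subseteq> carrier R" "finite ?A" using P B(1) unfolding P_def by auto
    have J: "J = SI (Idl ?A)" using B(3) BP Idl_L_eq[OF P] by simp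
    have IW: "Idl ?A \<subseteq> W_set R N" using JW J SI_W[OF Idl_sub[OF A(1)]] by simp
    have "fg_ideal R (Idl ?A)" unfolding fg_ideal_def using A by blast
    then have "ideal_smult N (Idl ?A) \<noteq> carrier N" using a IW unfolding dual_prop_A_def by blast
    then show "ideal_smult N' J \<noteq> carrier N'"
      using ideal_smult_eq[OF Idl_sub[OF A(1)]] J carrier_N carrier_N' by simp
  qed
next
  assume b: "dual_prop_A L N'"
  show "dual_prop_A R N"
    unfolding dual_prop_A_def
  proof (intro allI impI, elim conjE)
    fix I assume fg: "fg_ideal R I" and IW: "I \<subseteq> W_set R N"
    then obtain A where A: "finite A" "A \<subseteq> carrier R" "I = Idl A" unfolding fg_ideal_def by blast
    let ?P = "A \<times> {\<one>}"
    have P: "?P \<subseteq> carrier R \<times> S" using A one_S by auto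
    have fP: "fst ` ?P = A" by auto
    let ?B = "(\<lambda>p. rcls (fst p) (snd p)) ` ?P"
    have J: "Idl\<^bsub>L\<^esub> ?B = SI I" using Idl_L_eq[OF P] fP A(3) by simp
    have "finite ?B" using A(1) by simp
    moreover have "?B \<subseteq> carrier L" using P rcls_in by auto
    ultimately have "fg_ideal L (Idl\<^bsub>L\<^esub> ?B)" unfolding fg_ideal_def by blast
    moreover have "Idl\<^bsub>L\<^esub> ?B \<subseteq> W_set L N'" using J SI_W[OF Idl_sub[OF A(2)]] IW A(3) by simp
    ultimately have "ideal_smult N' (Idl\<^bsub>L\<^esub> ?B) \<noteq> carrier N'" using b unfolding dual_prop_A_def by blast
    then show "ideal_smult N I \<noteq> carrier N"
      using ideal_smult_eq[OF Idl_sub[OF A(2)]] J A(3) carrier_N carrier_N' by simp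
  qed
qed

end


locale locS2 = locS +
  assumes hW: "S \<inter> W_set R M = {}" and hZ: "S \<inter> Z_set R M = {}"
begin

definition "phi m = cls m \<one>"

lemma s_surj: "s \<in> S \<Longrightarrow> m \<in> carrier M \<Longrightarrow> \<exists>m'\<in>carrier M. s \<odot>\<^bsub>M\<^esub> m' = m"
proof -
  assume s: "s \<in> S" and m: "m \<in> carrier M"
  have "s \<notin> W_set R M" using hW s by blast
  then have "(\<lambda>m. s \<odot>\<^bsub>M\<^esub> m) ` carrier M = carrier M" using S_car[OF s] unfolding W_set_def by blast
  then show ?thesis using m by (metis imageE)
qed

lemma s_inj: "s \<in> S \<Longrightarrow> m \<in> carrier M \<Longrightarrow> s \<odot>\<^bsub>M\<^esub> m = \<zero>\<^bsub>M\<^esub> \<Longrightarrow> m = \<zero>\<^bsub>M\<^esub>"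
proof (rule ccontr)
  assume s: "s \<in> S" and m: "m \<in> carrier M" and e: "s \<odot>\<^bsub>M\<^esub> m = \<zero>\<^bsub>M\<^esub>" and n: "m \<noteq> \<zero>\<^bsub>M\<^esub>"
  then have "s \<in> Z_set R M" unfolding Z_set_def using S_car[OF s] by blast
  then show False using hZ s by blast
qed

lemma phi_in: "m \<in> carrier M \<Longrightarrow> phi m \<in> carrier N"
  unfolding phi_def using one_S by (simp add: cls_in)

lemma phi_inj: "inj_on phi (carrier M)"
proof (rule inj_onI)
  fix m m' assume m: "m \<in> carrier M" and m': "m' \<in> carrier M" and e: "phi m = phi m'"
  then have "((m,\<one>),(m',\<one>)) \<in> E" unfolding phi_def using cls_eq_iff one_S by blast
  then obtain u where u: "u \<in> S" "(u \<otimes> \<one>) \<odot>\<^bsub>M\<^esub> m = (u \<otimes> \<one>) \<odot>\<^bsub>M\<^esub> m'" unfolding E_iff by blast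
  have uc: "u \<in> carrier R" using u S_car by auto
  have "u \<odot>\<^bsub>M\<^esub> m = u \<odot>\<^bsub>M\<^esub> m'" using u uc by simp
  then have "u \<odot>\<^bsub>M\<^esub> m \<ominus>\<^bsub>M\<^esub> u \<odot>\<^bsub>M\<^esub> m' = \<zero>\<^bsub>M\<^esub>" using M.minus_zero_iff uc m m' by simp
  moreover have "u \<odot>\<^bsub>M\<^esub> (m \<ominus>\<^bsub>M\<^esub> m') = u \<odot>\<^bsub>M\<^esub> m \<ominus>\<^bsub>M\<^esub> u \<odot>\<^bsub>M\<^esub> m'"
    using uc m m' by (simp add: M.minus_eq smult_r_distr smult_r_minus)
  ultimately have "m \<ominus>\<^bsub>M\<^esub> m' = \<zero>\<^bsub>M\<^esub>" using s_inj[OF u(1)] m m' by simp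
  then show "m = m'" using M.minus_zero_iff m m' by simp
qed

lemma phi_surj: "phi ` carrier M = carrier N"
proof
  show "phi ` carrier M \<subseteq> carrier N" using phi_in by blast
  show "carrier N \<subseteq> phi ` carrier M"
  proof
    fix x assume "x \<in> carrier N"
    then obtain m s where ms: "m \<in> carrier M" "s \<in> S" "x = cls m s" by (rule N_cases)
    obtain m' where m': "m' \<in> carrier M" "s \<odot>\<^bsub>M\<^esub> m' = m" using s_surj[OF ms(2,1)] by blast
    have "cls m s = cls m' \<one>" using ms m' one_S by (intro cls_eqI) auto
    then show "x \<in> phi ` carrier M" using ms m' unfolding phi_def by blast
  qed
qed

lemma phi_smult: "r \<in> carrier R \<Longrightarrow> m \<in> carrier M \<Longrightarrow> phi (r \<odot>\<^bsub>M\<^esub> m) = r \<odot>\<^bsub>N\<^esub> phi m"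
  unfolding phi_def using one_S by (simp add: cls_smult)

lemma phi_add: "m \<in> carrier M \<Longrightarrow> n \<in> carrier M \<Longrightarrow> phi (m \<oplus>\<^bsub>M\<^esub> n) = phi m \<oplus>\<^bsub>N\<^esub> phi n"
  unfolding phi_def using one_S by (simp add: cls_add)

lemma phi_zero: "phi \<zero>\<^bsub>M\<^esub> = \<zero>\<^bsub>N\<^esub>"
  unfolding phi_def zero_N ..

lemma phi_inv: assumes m: "m \<in> carrier M" shows "inv\<^bsub>add_monoid N\<^esub> (phi m) = phi (\<ominus>\<^bsub>M\<^esub> m)"
  unfolding m_inv_def
proof (rule the_equality)
  have mi: "\<ominus>\<^bsub>M\<^esub> m \<in> carrier M" using m by simp
  show "phi (\<ominus>\<^bsub>M\<^esub> m) \<in> carrier (add_monoid N) \<and> phi m \<otimes>\<^bsub>add_monoid N\<^esub> phi (\<ominus>\<^bsub>M\<^esub> m) = \<one>\<^bsub>add_monoid N\<^esub> \<and>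
     phi (\<ominus>\<^bsub>M\<^esub> m) \<otimes>\<^bsub>add_monoid N\<^esub> phi m = \<one>\<^bsub>add_monoid N\<^esub>"
    using m mi phi_in phi_add[symmetric] phi_zero[symmetric] by (simp add: M.r_neg M.l_neg)
  fix y assume "y \<in> carrier (add_monoid N) \<and> phi m \<otimes>\<^bsub>add_monoid N\<^esub> y = \<one>\<^bsub>add_monoid N\<^esub> \<and>
     y \<otimes>\<^bsub>add_monoid N\<^esub> phi m = \<one>\<^bsub>add_monoid N\<^esub>"
  then have y: "y \<in> carrier N" "phi m \<oplus>\<^bsub>N\<^esub> y = \<zero>\<^bsub>N\<^esub>" by simp_all
  obtain z where z: "z \<in> carrier M" "y = phi z" using y(1) phi_surj by blast
  have "phi (m \<oplus>\<^bsub>M\<^esub> z) = phi \<zero>\<^bsub>M\<^esub>" using y z m phi_add phi_zero by simp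
  then have "m \<oplus>\<^bsub>M\<^esub> z = \<zero>\<^bsub>M\<^esub>" using phi_inj m z by (simp add: inj_on_def)
  then have "z \<oplus>\<^bsub>M\<^esub> m = \<zero>\<^bsub>M\<^esub>" using m z M.a_comm by simp
  then have "\<ominus>\<^bsub>M\<^esub> m = z" using m z by (intro M.minus_equality) auto
  then show "y = phi (\<ominus>\<^bsub>M\<^esub> m)" using z by simp
qed


lemma gen_M_sub: "Xs \<subseteq> carrier M \<Longrightarrow> generate (add_monoid M) Xs \<subseteq> carrier M"
  using M.add.generate_incl by simp

lemma gen_image: assumes Xs: "Xs \<subseteq> carrier M"
  shows "generate (add_monoid N) (phi ` Xs) = phi ` generate (add_monoid M) Xs"
proof
  show "generate (add_monoid N) (phi ` Xs) \<subseteq> phi ` generate (add_monoid M) Xs"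
  proof
    fix y assume "y \<in> generate (add_monoid N) (phi ` Xs)"
    then show "y \<in> phi ` generate (add_monoid M) Xs"
    proof induction
      case one
      have "\<zero>\<^bsub>M\<^esub> \<in> generate (add_monoid M) Xs" using generate.one[of "add_monoid M" Xs] by simp
      then show ?case using phi_zero by (metis monoid.select_convs(2) image_eqI)
    next
      case (incl h)
      then obtain x where "x \<in> Xs" "h = phi x" by blast
      then show ?case using generate.incl[of x Xs "add_monoid M"] by blast
    next
      case (inv h)
      then obtain x where x: "x \<in> Xs" "h = phi x" by blast
      have xc: "x \<in> carrier M" using x Xs by blast
      have "inv\<^bsub>add_monoid M\<^esub> x \<in> generate (add_monoid M) Xs" using generate.inv[of x Xs "add_monoid M"] x by blast
      moreover have "inv\<^bsub>add_monoid N\<^esub> h = phi (inv\<^bsub>add_monoid M\<^esub> x)"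
        using phi_inv[OF xc] x by (simp add: a_inv_def)
      ultimately show ?case by blast
    next
      case (eng h1 h2)
      then obtain g1 g2 where g: "g1 \<in> generate (add_monoid M) Xs" "h1 = phi g1"
        "g2 \<in> generate (add_monoid M) Xs" "h2 = phi g2" by blast
      have gc: "g1 \<in> carrier M" "g2 \<in> carrier M" using g gen_M_sub[OF Xs] by blast+
      have "g1 \<oplus>\<^bsub>M\<^esub> g2 \<in> generate (add_monoid M) Xs" using generate.eng[of g1 "add_monoid M" Xs g2] g by simp
      moreover have "h1 \<otimes>\<^bsub>add_monoid N\<^esub> h2 = phi (g1 \<oplus>\<^bsub>M\<^esub> g2)" using g gc phi_add by simp
      ultimately show ?case by blast
    qed
  qed
  show "phi ` generate (add_monoid M) Xs \<subseteq> generate (add_monoid N) (phi ` Xs)"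
  proof
    fix y assume "y \<in> phi ` generate (add_monoid M) Xs"
    then obtain g where g: "g \<in> generate (add_monoid M) Xs" "y = phi g" by blast
    have "g \<in> carrier M \<and> phi g \<in> generate (add_monoid N) (phi ` Xs)" using g(1)
    proof induction
      case one
      have "\<zero>\<^bsub>N\<^esub> \<in> generate (add_monoid N) (phi ` Xs)" using generate.one[of "add_monoid N" "phi ` Xs"] by simp
      then show ?case using phi_zero by simp
    next
      case (incl h)
      then show ?case using generate.incl[of "phi h" "phi ` Xs" "add_monoid N"] Xs by blast
    next
      case (inv h)
      have hc: "h \<in> carrier M" using inv Xs by blast
      have "inv\<^bsub>add_monoid N\<^esub> (phi h) \<in> generate (add_monoid N) (phi ` Xs)"
        using generate.inv[of "phi h" "phi ` Xs" "add_monoid N"] inv by blast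
      then show ?case using phi_inv[OF hc] hc by (simp add: a_inv_def[symmetric])
    next
      case (eng h1 h2)
      have "phi h1 \<oplus>\<^bsub>N\<^esub> phi h2 \<in> generate (add_monoid N) (phi ` Xs)"
        using generate.eng[of "phi h1" "add_monoid N" "phi ` Xs" "phi h2"] eng by simp
      then show ?case using eng phi_add by simp
    qed
    then show "y \<in> generate (add_monoid N) (phi ` Xs)" using g by simp
  qed
qed

lemma W_eq: "W_set R N = W_set R M"
proof -
  have "(\<lambda>x. r \<odot>\<^bsub>N\<^esub> x) ` carrier N = carrier N \<longleftrightarrow> (\<lambda>m. r \<odot>\<^bsub>M\<^esub> m) ` carrier M = carrier M"
    if r: "r \<in> carrier R" for r
  proof -
    have "(\<lambda>x. r \<odot>\<^bsub>N\<^esub> x) ` carrier N = phi ` ((\<lambda>m. r \<odot>\<^bsub>M\<^esub> m) ` carrier M)"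
      unfolding phi_surj[symmetric] image_image using phi_smult[OF r] by simp
    moreover have "(\<lambda>m. r \<odot>\<^bsub>M\<^esub> m) ` carrier M \<subseteq> carrier M" using r by auto
    ultimately show ?thesis unfolding phi_surj[symmetric]
      using inj_on_image_eq_iff[OF phi_inj] by simp
  qed
  then show ?thesis unfolding W_set_def by auto
qed

lemma ismult_eq: assumes I: "I \<subseteq> carrier R"
  shows "ideal_smult N I = phi ` ideal_smult M I"
proof -
  have "{a \<odot>\<^bsub>N\<^esub> x | a x. a \<in> I \<and> x \<in> carrier N} = phi ` {a \<odot>\<^bsub>M\<^esub> m | a m. a \<in> I \<and> m \<in> carrier M}"
  proof
    show "{a \<odot>\<^bsub>N\<^esub> x | a x. a \<in> I \<and> x \<in> carrier N} \<subseteq> phi ` {a \<odot>\<^bsub>M\<^esub> m | a m. a \<in> I \<and> m \<in> carrier M}"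
    proof
      fix y assume "y \<in> {a \<odot>\<^bsub>N\<^esub> x | a x. a \<in> I \<and> x \<in> carrier N}"
      then obtain a x where h: "a \<in> I" "x \<in> carrier N" "y = a \<odot>\<^bsub>N\<^esub> x" by blast
      obtain m where m: "m \<in> carrier M" "x = phi m" using h(2) phi_surj by blast
      have "y = phi (a \<odot>\<^bsub>M\<^esub> m)" using h m I phi_smult by auto
      then show "y \<in> phi ` {a \<odot>\<^bsub>M\<^esub> m | a m. a \<in> I \<and> m \<in> carrier M}" using h m by blast
    qed
    show "phi ` {a \<odot>\<^bsub>M\<^esub> m | a m. a \<in> I \<and> m \<in> carrier M} \<subseteq> {a \<odot>\<^bsub>N\<^esub> x | a x. a \<in> I \<and> x \<in> carrier N}"
    proof
      fix y assume "y \<in> phi ` {a \<odot>\<^bsub>M\<^esub> m | a m. a \<in> I \<and> m \<in> carrier M}"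
      then obtain a m where h: "a \<in> I" "m \<in> carrier M" "y = phi (a \<odot>\<^bsub>M\<^esub> m)" by blast
      have "y = a \<odot>\<^bsub>N\<^esub> phi m" using h I phi_smult by auto
      then show "y \<in> {a \<odot>\<^bsub>N\<^esub> x | a x. a \<in> I \<and> x \<in> carrier N}" using h phi_in by blast
    qed
  qed
  moreover have "{a \<odot>\<^bsub>M\<^esub> m | a m. a \<in> I \<and> m \<in> carrier M} \<subseteq> carrier M" using I by auto
  ultimately show ?thesis unfolding ideal_smult_def using gen_image by simp
qed

lemma part2: "dual_prop_A R N \<longleftrightarrow> dual_prop_A R M"
proof -
  have "ideal_smult N I = carrier N \<longleftrightarrow> ideal_smult M I = carrier M" if I: "I \<subseteq> carrier R" for I
  proof -
    have "ideal_smult M I \<subseteq> carrier M" unfolding ideal_smult_def using I by (intro gen_M_sub) auto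
    then show ?thesis unfolding ismult_eq[OF I] phi_surj[symmetric]
      using inj_on_image_eq_iff[OF phi_inj] by simp
  qed
  moreover have "W_set R M \<subseteq> carrier R" unfolding W_set_def by auto
  ultimately show ?thesis unfolding dual_prop_A_def W_eq by blast
qed

end

theorem corollary2p10:
  fixes R :: "('a, 'c) ring_scheme" and M :: "('a, 'b, 'd) module_scheme" and S :: "'a set"
  assumes "module R M"
    and "mult_closed R S"
  shows "(dual_prop_A R (loc_module R M S) \<longleftrightarrow> dual_prop_A (loc_ring R S) (loc_module_loc R M S))
    \<and> (S \<inter> W_set R M = {} \<and> S \<inter> Z_set R M = {} \<longrightarrow>
         ((dual_prop_A R (loc_module R M S) \<longleftrightarrow> dual_prop_A (loc_ring R S) (loc_module_loc R M S))
          \<and> (dual_prop_A (loc_ring R S) (loc_module_loc R M S) \<longleftrightarrow> dual_prop_A R M)))"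
proof -
  interpret L0: locS R M S by (intro locS.intro locS_axioms.intro assms)
  have p1: "dual_prop_A R (loc_module R M S) \<longleftrightarrow> dual_prop_A (loc_ring R S) (loc_module_loc R M S)"
    by (rule L0.part1)
  show ?thesis
  proof (intro conjI impI)
    show "dual_prop_A R (loc_module R M S) \<longleftrightarrow> dual_prop_A (loc_ring R S) (loc_module_loc R M S)" by (rule p1)
    show "dual_prop_A R (loc_module R M S) \<longleftrightarrow> dual_prop_A (loc_ring R S) (loc_module_loc R M S)" by (rule p1)
    assume h: "S \<inter> W_set R M = {} \<and> S \<inter> Z_set R M = {}"
    interpret L1: locS2 R M S by (intro locS2.intro locS2_axioms.intro L0.locS_axioms) (use h in auto)
    show "dual_prop_A (loc_ring R S) (loc_module_loc R M S) \<longleftrightarrow> dual_prop_A R M"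
      using p1 L1.part2 by simp
  qed
qed

end
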